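(* Let $\Pi:\mathbb{R}^{3N}\to\mathbb{R}^6$, $\Pi(x)=(\Pi_1(x),\Pi_2(x))$ with $\Pi_i(x)=\sum_{j=1}^N\zeta_{ij}x_j$, $i=1,2$, where $\sum_j\zeta_{ij}=1$ for $i=1,2$ and $\zeta_{1j}\zeta_{2j}=0$ for all $j$ (each atom contributes to at most one CG particle). Let $C_i=\{j:\zeta_{ij}\neq0\}$. Then (i) $h(x)=\Big(\sum_j\frac{\zeta_{1j}}{\sum_k\zeta_{1k}^2}f_j(x),\ \sum_j\frac{\zeta_{2j}}{\sum_k\zeta_{2k}^2}f_j(x)\Big)$ and (ii) $h(x)=\Big(\sum_{j\in C_1}f_j(x),\ \sum_{j\in C_2}f_j(x)\Big)$ both satisfy (assuming $h\in L^1(\mu)$) $F^{\mathrm{PMF}}(z)=\mathbb{E}_\mu[h\mid\Pi=z]$ for all $z\in\mathbb{R}^6$.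
   Context: Standing setting: $\beta>0$; $U:\mathbb{R}^{3N}\to\mathbb{R}$ smooth with $Z=\int e^{-\beta U}dx<\infty$; $\mu(dx)=Z^{-1}e^{-\beta U}dx$; $x=(x_1,\dots,x_N)$, $x_j\in\mathbb{R}^3$; $f_j=-\nabla_{x_j}U$. $\bar\mu$ is the Lebesgue density of $\Pi_{\#}\mu$, assumed positive and $C^1$; $\bar U^{\mathrm{PMF}}(z)=-\beta^{-1}\log\bar\mu(z)-\beta^{-1}\log Z$; $F^{\mathrm{PMF}}=-\nabla_z\bar U^{\mathrm{PMF}}$; $\mathbb{E}_\mu[\cdot\mid\Pi=z]$ is conditional expectation given $\Pi=z$. Assume both $C_1,C_2$ nonempty so that $\Pi$ has rank 6. *)

theory Defs
  imports "HOL-Analysis.Analysis" "HOL-Probability.Probability"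
begin

text \<open>Smoothness (C-infinity): differentiable everywhere, and every first-order
  partial derivative is again smooth (coinductively, i.e. derivatives of all orders).\<close>
coinductive smooth_fun :: "('a::euclidean_space \<Rightarrow> real) \<Rightarrow> bool" where
  "(\<forall>x. g differentiable (at x)) \<Longrightarrow>
   (\<forall>b\<in>Basis. smooth_fun (\<lambda>x. frechet_derivative g (at x) b)) \<Longrightarrow> smooth_fun g"

definition C1_fun :: "('a::euclidean_space \<Rightarrow> real) \<Rightarrow> bool" where
  "C1_fun g \<longleftrightarrow> (\<forall>x. g differentiable (at x)) \<and>
     (\<forall>b\<in>Basis. continuous_on UNIV (\<lambda>x. frechet_derivative g (at x) b))"

definition grad :: "('a::euclidean_space \<Rightarrow> real) \<Rightarrow> 'a \<Rightarrow> 'a" where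
  "grad g x = (\<Sum>b\<in>Basis. frechet_derivative g (at x) b *\<^sub>R b)"

text \<open>Configuration space R^{3N}: x = (x_1,...,x_N), x_j in R^3, indices of type 'n (N = CARD('n)).
  Atomic force f_j = - grad_{x_j} U.\<close>
definition force :: "(real^3^'n \<Rightarrow> real) \<Rightarrow> 'n::finite \<Rightarrow> real^3^'n \<Rightarrow> real^3" where
  "force U j x = - (grad U x $ j)"

definition partition_fn :: "real \<Rightarrow> ('a::euclidean_space \<Rightarrow> real) \<Rightarrow> real" where
  "partition_fn \<beta> U = (\<integral>x. exp (- \<beta> * U x) \<partial>lborel)"

definition gibbs :: "real \<Rightarrow> ('a::euclidean_space \<Rightarrow> real) \<Rightarrow> 'a measure" where
  "gibbs \<beta> U = density lborel (\<lambda>x. ennreal (exp (- \<beta> * U x) / partition_fn \<beta> U))"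

definition cg_map :: "('n::finite \<Rightarrow> real) \<Rightarrow> ('n \<Rightarrow> real) \<Rightarrow> real^3^'n \<Rightarrow> (real^3) \<times> (real^3)" where
  "cg_map \<zeta>1 \<zeta>2 x = ((\<Sum>j\<in>UNIV. \<zeta>1 j *\<^sub>R x $ j), (\<Sum>j\<in>UNIV. \<zeta>2 j *\<^sub>R x $ j))"

definition pmf_potential :: "real \<Rightarrow> real \<Rightarrow> ('b \<Rightarrow> real) \<Rightarrow> 'b \<Rightarrow> real" where
  "pmf_potential \<beta> Z mubar z = - (1/\<beta>) * ln (mubar z) - (1/\<beta>) * ln Z"

definition pmf_force :: "real \<Rightarrow> real \<Rightarrow> ('b::euclidean_space \<Rightarrow> real) \<Rightarrow> 'b \<Rightarrow> 'b" where
  "pmf_force \<beta> Z mubar z = - grad (pmf_potential \<beta> Z mubar) z"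

text \<open>h is a version of E_mu[h | Pi] equal to F(Pi): componentwise, the (library) conditional
  expectation of h with respect to sigma(Pi) agrees mu-a.e. with F o Pi.\<close>
definition is_cond_exp_given :: "'a measure \<Rightarrow> ('a \<Rightarrow> 'b::euclidean_space) \<Rightarrow> ('a \<Rightarrow> 'c::euclidean_space) \<Rightarrow> ('b \<Rightarrow> 'c) \<Rightarrow> bool" where
  "is_cond_exp_given M P h F \<longleftrightarrow>
     (\<forall>c\<in>Basis. AE x in M.
        real_cond_exp M (vimage_algebra (space M) P borel) (\<lambda>y. h y \<bullet> c) x = F (P x) \<bullet> c)"

end

theory Submission
  imports Defs
begin

lemma lborel_translate_integral:
  fixes f :: "'a::euclidean_space \<Rightarrow> real"
  assumes [measurable]: "f \<in> borel_measurable borel"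
  shows "(\<integral>x. f (c + x) \<partial>lborel) = (\<integral>x. f x \<partial>lborel)"
proof -
  have "(\<integral>x. f x \<partial>lborel) = (\<integral>x. f x \<partial>(distr lborel borel ((+) c)))"
    by (simp add: lborel_distr_plus)
  also have "\<dots> = (\<integral>x. f (c + x) \<partial>lborel)"
    by (subst integral_distr) auto
  finally show ?thesis by simp
qed

lemma lborel_translate_integrable:
  fixes f :: "'a::euclidean_space \<Rightarrow> real"
  assumes [measurable]: "f \<in> borel_measurable borel"
  shows "integrable lborel (\<lambda>x. f (c + x)) \<longleftrightarrow> integrable lborel f"
proof -
  have "integrable lborel f \<longleftrightarrow> integrable (distr lborel borel ((+) c)) f"
    by (simp add: lborel_distr_plus)
  also have "\<dots> \<longleftrightarrow> integrable lborel (\<lambda>x. f (c + x))"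
    by (subst integrable_distr_eq) auto
  finally show ?thesis by simp
qed

lemma gen_deriv:
  fixes w G G' :: "'a::euclidean_space \<Rightarrow> real" and v :: 'a
  assumes Gc: "continuous_on UNIV G'"
  and D: "\<And>x t. ((\<lambda>s. G (x + s *\<^sub>R v)) has_real_derivative G' (x + t *\<^sub>R v)) (at t)"
  and I: "\<And>t. 0 \<le> t \<Longrightarrow> t \<le> 1 \<Longrightarrow> integrable lborel (\<lambda>x. w x * G (x + t *\<^sub>R v))"
  and F: "\<And>t. 0 \<le> t \<Longrightarrow> t \<le> 1 \<Longrightarrow> integrable (lborel \<Otimes>\<^sub>M lborel) (\<lambda>(x,s). w x * (indicator {0..t} s *\<^sub>R G' (x + s *\<^sub>R v)))"
  and C: "continuous_on {0..1} (\<lambda>s. \<integral>x. w x * G' (x + s *\<^sub>R v) \<partial>lborel)"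
  shows "((\<lambda>t. ((\<integral>x. w x * G (x + t *\<^sub>R v) \<partial>lborel) - (\<integral>x. w x * G (x + 0 *\<^sub>R v) \<partial>lborel)) / t)
           \<longlongrightarrow> (\<integral>x. w x * G' (x + 0 *\<^sub>R v) \<partial>lborel)) (at_right 0)"
proof -
  define \<psi> where "\<psi> s = (\<integral>x. w x * G' (x + s *\<^sub>R v) \<partial>lborel)" for s
  define \<Phi> where "\<Phi> t = (\<integral>x. w x * G (x + t *\<^sub>R v) \<partial>lborel)" for t
  define H where "H u = integral {0..u} \<psi>" for u
  have eq: "\<Phi> t - \<Phi> 0 = H t" if t: "0 \<le> t" "t \<le> 1" for t
  proof -
    have ftc: "G (x + t *\<^sub>R v) - G (x + 0 *\<^sub>R v) = (\<integral>s. indicator {0..t} s *\<^sub>R G' (x + s *\<^sub>R v) \<partial>lborel)" for x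
    proof (rule integral_FTC_atLeastAtMost[symmetric])
      show "0 \<le> t" by fact
      show "((\<lambda>s. G (x + s *\<^sub>R v)) has_vector_derivative G' (x + s *\<^sub>R v)) (at s within {0..t})" for s
        using D[of x s] by (simp add: has_real_derivative_iff_has_vector_derivative has_vector_derivative_at_within)
      show "continuous_on {0..t} (\<lambda>s. G' (x + s *\<^sub>R v))"
        by (intro continuous_on_compose2[OF Gc] continuous_intros) auto
    qed
    have "\<Phi> t - \<Phi> 0 = (\<integral>x. w x * G (x + t *\<^sub>R v) - w x * G (x + 0 *\<^sub>R v) \<partial>lborel)"
      unfolding \<Phi>_def by (rule Bochner_Integration.integral_diff[symmetric]) (use I[of t] I[of 0] t in auto)
    also have "\<dots> = (\<integral>x. (\<integral>s. w x * (indicator {0..t} s *\<^sub>R G' (x + s *\<^sub>R v)) \<partial>lborel) \<partial>lborel)"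
      by (intro Bochner_Integration.integral_cong refl) (simp only: integral_mult_right_zero ftc[symmetric] right_diff_distrib)
    also have "\<dots> = (\<integral>s. (\<integral>x. w x * (indicator {0..t} s *\<^sub>R G' (x + s *\<^sub>R v)) \<partial>lborel) \<partial>lborel)"
      by (rule lborel_pair.Fubini_integral[symmetric]) (use F t in simp)
    also have "\<dots> = (\<integral>s. indicator {0..t} s *\<^sub>R \<psi> s \<partial>lborel)"
      unfolding \<psi>_def by (intro Bochner_Integration.integral_cong refl) (auto simp: indicator_def)
    also have "\<dots> = H t - H 0"
      unfolding H_def
    proof (rule integral_FTC_atLeastAtMost)
      show "0 \<le> t" by fact
      have cc: "continuous_on {0..t} \<psi>" unfolding \<psi>_def by (rule continuous_on_subset[OF C]) (use t in auto)
      show "((\<lambda>u. integral {0..u} \<psi>) has_vector_derivative \<psi> s) (at s within {0..t})" if "0 \<le> s" "s \<le> t" for s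
        using integral_has_vector_derivative[OF cc] that by auto
      show "continuous_on {0..t} \<psi>" by fact
    qed
    finally show ?thesis by (simp add: H_def)
  qed
  have "(H has_real_derivative \<psi> 0) (at 0 within {0..1})"
    unfolding H_def by (rule integral_has_real_derivative) (use C in \<open>auto simp: \<psi>_def\<close>)
  then have "((\<lambda>y. (H y - H 0) / (y - 0)) \<longlongrightarrow> \<psi> 0) (at_right 0)"
    by (simp add: has_field_derivative_iff at_within_Icc_at_right)
  then have lim: "((\<lambda>y. H y / y) \<longlongrightarrow> \<psi> 0) (at_right 0)"
    by (simp add: H_def)
  have ev: "\<forall>\<^sub>F t in at_right 0. H t / t = (\<Phi> t - \<Phi> 0) / t"
    unfolding eventually_at_right_field
    by (rule exI[of _ 1]) (auto simp: eq)
  show ?thesis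
    using tendsto_cong[OF ev] lim unfolding \<Phi>_def \<psi>_def by simp
qed

lemma null_frontier_box_shift:
  fixes a b d :: "'b::euclidean_space"
  shows "{z. z - d \<in> frontier (box a b)} \<in> null_sets lborel"
proof -
  have sub: "frontier (box a b) \<subseteq> cbox a b - box a b"
  proof -
    have "closure (box a b) \<subseteq> cbox a b"
      by (rule closure_minimal) (auto simp: box_subset_cbox closed_cbox)
    then show ?thesis by (auto simp: frontier_def interior_open[OF open_box])
  qed
  have "negligible (frontier (box a b))"
    by (rule negligible_subset[OF negligible_frontier_interval sub])
  then have "negligible ((+) d ` frontier (box a b))"
    by (rule negligible_translation)
  moreover have "(+) d ` frontier (box a b) = {z. z - d \<in> frontier (box a b)}"
    by (auto simp: image_iff) (metis add.commute diff_add_cancel)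
  ultimately have neg: "negligible {z. z - d \<in> frontier (box a b)}" by simp
  have cl: "closed {z. z - d \<in> frontier (box a b)}"
  proof -
    have "closed ((\<lambda>z. z - d) -` frontier (box a b))"
      by (intro closed_vimage continuous_intros) auto
    then show ?thesis by (simp add: vimage_def)
  qed
  then have "{z. z - d \<in> frontier (box a b)} \<in> sets lborel"
    by (simp add: borel_closed)
  with neg show ?thesis
    by (simp add: negligible_iff_null_sets null_sets_completion_iff)
qed

lemma indicator_box_tendsto:
  fixes q :: "'b::euclidean_space"
  assumes "q \<notin> frontier (box a b)" and lim: "(f \<longlongrightarrow> q) F"
  shows "((\<lambda>n. indicator (box a b) (f n) :: real) \<longlongrightarrow> indicator (box a b) q) F"
proof (cases "q \<in> box a b")
  case True
  have "eventually (\<lambda>n. f n \<in> box a b) F"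
    by (rule topological_tendstoD[OF lim open_box True])
  then have "eventually (\<lambda>n. indicator (box a b) (f n) = (indicator (box a b) q :: real)) F"
    by eventually_elim (use True in auto)
  then show ?thesis by (rule tendsto_eventually)
next
  case False
  then have "q \<in> - closure (box a b)"
    using assms(1) by (auto simp: frontier_def interior_open[OF open_box])
  have "eventually (\<lambda>n. f n \<in> - closure (box a b)) F"
    by (rule topological_tendstoD[OF lim _ \<open>q \<in> - closure (box a b)\<close>]) auto
  then have "eventually (\<lambda>n. indicator (box a b) (f n) = (indicator (box a b) q :: real)) F"
    by eventually_elim (use False closure_subset in \<open>auto simp: indicator_def\<close>)
  then show ?thesis by (rule tendsto_eventually)
qed

lemma cont_shift_indicator_integral:
  fixes h :: "'a::euclidean_space \<Rightarrow> real" and Q :: "'a \<Rightarrow> 'b::euclidean_space"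
  assumes hi: "integrable lborel h" and Qm[measurable]: "Q \<in> borel_measurable borel"
    and ae: "\<And>d. AE y in lborel. Q y - d \<notin> frontier (box a b)"
  shows "continuous_on UNIV (\<lambda>s. \<integral>y. indicator (box a b) (Q y - s *\<^sub>R c) * h y \<partial>lborel)"
proof (rule continuous_on_sequentiallyI)
  fix u :: "nat \<Rightarrow> real" and s0 assume u: "u \<longlonglongrightarrow> s0"
  have hm[measurable]: "h \<in> borel_measurable borel" using hi by (simp add: borel_measurable_integrable)
  show "(\<lambda>n. \<integral>y. indicator (box a b) (Q y - u n *\<^sub>R c) * h y \<partial>lborel) \<longlonglongrightarrow>
        (\<integral>y. indicator (box a b) (Q y - s0 *\<^sub>R c) * h y \<partial>lborel)"
  proof (rule integral_dominated_convergence[where w="\<lambda>y. norm (h y)"])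
    show "integrable lborel (\<lambda>y. norm (h y))" using hi by simp
    show "(\<lambda>y. indicator (box a b) (Q y - s0 *\<^sub>R c) * h y) \<in> borel_measurable lborel" by measurable
    show "(\<lambda>y. indicator (box a b) (Q y - u n *\<^sub>R c) * h y) \<in> borel_measurable lborel" for n by measurable
    show "AE y in lborel. norm (indicator (box a b) (Q y - u n *\<^sub>R c) * h y) \<le> norm (h y)" for n
      by (auto simp: indicator_def)
    show "AE y in lborel. (\<lambda>n. indicator (box a b) (Q y - u n *\<^sub>R c) * h y) \<longlonglongrightarrow>
          indicator (box a b) (Q y - s0 *\<^sub>R c) * h y"
      using ae[of "s0 *\<^sub>R c"]
    proof eventually_elim
      case (elim y)
      have "(\<lambda>n. Q y - u n *\<^sub>R c) \<longlonglongrightarrow> Q y - s0 *\<^sub>R c"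
        by (intro tendsto_intros u)
      from indicator_box_tendsto[OF elim this]
      show ?case by (intro tendsto_intros)
    qed
  qed
qed

lemma lborel_translate_integral':
  fixes f :: "'a::euclidean_space \<Rightarrow> real"
  assumes [measurable]: "f \<in> borel_measurable borel"
  shows "(\<integral>x. f (x + c) \<partial>lborel) = (\<integral>x. f x \<partial>lborel)"
  using lborel_translate_integral[OF assms, of c] by (simp add: add.commute)

lemma lborel_translate_integrable':
  fixes f :: "'a::euclidean_space \<Rightarrow> real"
  assumes [measurable]: "f \<in> borel_measurable borel"
  shows "integrable lborel (\<lambda>x. f (x + c)) \<longleftrightarrow> integrable lborel f"
  using lborel_translate_integrable[OF assms, of c] by (simp add: add.commute)

lemma lborel_translate_nn_integral:
  fixes f :: "'a::euclidean_space \<Rightarrow> ennreal"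
  assumes [measurable]: "f \<in> borel_measurable borel"
  shows "(\<integral>\<^sup>+x. f (x + c) \<partial>lborel) = (\<integral>\<^sup>+x. f x \<partial>lborel)"
proof -
  have "(\<integral>\<^sup>+x. f x \<partial>lborel) = (\<integral>\<^sup>+x. f x \<partial>(distr lborel borel ((+) c)))"
    by (simp add: lborel_distr_plus)
  also have "\<dots> = (\<integral>\<^sup>+x. f (c + x) \<partial>lborel)"
    by (subst nn_integral_distr) auto
  finally show ?thesis by (simp add: add.commute)
qed

lemma key_x_side:
  fixes P :: "'a::euclidean_space \<Rightarrow> 'b::euclidean_space" and g g' :: "'a \<Rightarrow> real"
    and m :: "'b \<Rightarrow> real" and v :: 'a and c :: 'b
  assumes linP: "linear P" and Pv: "P v = c"
    and gpos: "\<And>x. g x > 0" and g'c: "continuous_on UNIV g'"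
    and gD: "\<And>x t. ((\<lambda>s. g (x + s *\<^sub>R v)) has_real_derivative g' (x + t *\<^sub>R v)) (at t)"
    and gint: "integrable lborel g" and g'int: "integrable lborel g'"
    and mm[measurable]: "m \<in> borel_measurable borel"
    and dens: "distr (density lborel g) lborel P = density lborel m"
  shows "((\<lambda>t. ((\<integral>x. indicator (box a b) (P x) * g (x + t *\<^sub>R v) \<partial>lborel) - (\<integral>x. indicator (box a b) (P x) * g (x + 0 *\<^sub>R v) \<partial>lborel)) / t)
           \<longlongrightarrow> (\<integral>x. indicator (box a b) (P x) * g' (x + 0 *\<^sub>R v) \<partial>lborel)) (at_right 0)"
proof -
  have blP: "bounded_linear P" using linP by (simp add: linear_conv_bounded_linear)
  have Pm[measurable]: "P \<in> borel_measurable borel"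
    by (intro borel_measurable_continuous_onI linear_continuous_on blP)
  have gm[measurable]: "g \<in> borel_measurable borel" using gint by (simp add: borel_measurable_integrable)
  have g'm[measurable]: "g' \<in> borel_measurable borel" using g'int by (simp add: borel_measurable_integrable)
  have Pdiff: "P (y - t *\<^sub>R v) = P y - t *\<^sub>R c" for y t
    using linP Pv by (simp add: linear_diff linear_scale)
  have ae: "AE y in lborel. P y - d \<notin> frontier (box a b)" for d
  proof -
    let ?N = "{z. z - d \<in> frontier (box a b)}"
    have N: "?N \<in> null_sets lborel" by (rule null_frontier_box_shift)
    have Nm: "?N \<in> sets borel" using N by (simp add: null_sets_def)
    have Np[measurable]: "Measurable.pred borel (\<lambda>z. z - d \<in> frontier (box a b))"
      using Nm by (simp add: pred_def)
    have "AE z in lborel. z \<notin> ?N" using N by (rule AE_not_in)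
    then have "AE z in density lborel m. z \<notin> ?N"
      by (subst AE_density) (auto elim: AE_mp)
    then have "AE z in distr (density lborel g) lborel P. z \<notin> ?N" unfolding dens .
    then have "AE y in density lborel g. P y \<notin> ?N"
      by (subst (asm) AE_distr_iff) auto
    then have "AE y in lborel. 0 < g y \<longrightarrow> P y \<notin> ?N"
      by (subst (asm) AE_density) auto
    then show ?thesis using gpos by (auto elim: AE_mp)
  qed
  show ?thesis
  proof (rule gen_deriv[where G'=g'])
    show "continuous_on UNIV g'" by fact
    show "\<And>x t. ((\<lambda>s. g (x + s *\<^sub>R v)) has_real_derivative g' (x + t *\<^sub>R v)) (at t)" by fact
    show "integrable lborel (\<lambda>x. indicator (box a b) (P x) * g (x + t *\<^sub>R v))" for t
    proof (rule Bochner_Integration.integrable_bound[where f="\<lambda>x. g (x + t *\<^sub>R v)"])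
      show "integrable lborel (\<lambda>x. g (x + t *\<^sub>R v))"
        using gint by (subst lborel_translate_integrable') auto
    qed (auto simp: indicator_def)
    show "integrable (lborel \<Otimes>\<^sub>M lborel) (\<lambda>(x,s). indicator (box a b) (P x) * (indicator {0..t} s *\<^sub>R g' (x + s *\<^sub>R v)))"
      if t: "0 \<le> t" "t \<le> 1" for t
    proof (rule integrableI_bounded)
      show "(\<lambda>(x,s). indicator (box a b) (P x) * (indicator {0..t} s *\<^sub>R g' (x + s *\<^sub>R v))) \<in> borel_measurable (lborel \<Otimes>\<^sub>M lborel)"
        by measurable
      have "(\<integral>\<^sup>+p. norm ((\<lambda>(x,s). indicator (box a b) (P x) * (indicator {0..t} s *\<^sub>R g' (x + s *\<^sub>R v))) p) \<partial>(lborel \<Otimes>\<^sub>M lborel))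
          \<le> (\<integral>\<^sup>+p. ennreal (indicator {0..t} (snd p) * norm (g' (fst p + snd p *\<^sub>R v))) \<partial>(lborel \<Otimes>\<^sub>M lborel))"
        by (intro nn_integral_mono) (auto simp: indicator_def)
      also have "\<dots> = (\<integral>\<^sup>+s. (\<integral>\<^sup>+x. ennreal (indicator {0..t} s * norm (g' (x + s *\<^sub>R v))) \<partial>lborel) \<partial>lborel)"
        by (subst lborel_pair.nn_integral_snd[symmetric]) (auto simp: case_prod_beta)
      also have "\<dots> = (\<integral>\<^sup>+s. indicator {0..t} s * (\<integral>\<^sup>+x. ennreal (norm (g' x)) \<partial>lborel) \<partial>lborel)"
      proof (intro nn_integral_cong)
        fix s :: real
        have "(\<integral>\<^sup>+x. ennreal (indicator {0..t} s * norm (g' (x + s *\<^sub>R v))) \<partial>lborel)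
            = (\<integral>\<^sup>+x. indicator {0..t} s * ennreal (norm (g' (x + s *\<^sub>R v))) \<partial>lborel)"
          by (intro nn_integral_cong) (auto simp: indicator_def)
        also have "\<dots> = indicator {0..t} s * (\<integral>\<^sup>+x. ennreal (norm (g' (x + s *\<^sub>R v))) \<partial>lborel)"
          by (rule nn_integral_cmult) measurable
        also have "(\<integral>\<^sup>+x. ennreal (norm (g' (x + s *\<^sub>R v))) \<partial>lborel) = (\<integral>\<^sup>+x. ennreal (norm (g' x)) \<partial>lborel)"
          by (rule lborel_translate_nn_integral[where f="\<lambda>x. ennreal (norm (g' x))"]) measurable
        finally show "(\<integral>\<^sup>+x. ennreal (indicator {0..t} s * norm (g' (x + s *\<^sub>R v))) \<partial>lborel)
            = indicator {0..t} s * (\<integral>\<^sup>+x. ennreal (norm (g' x)) \<partial>lborel)" by simp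
      qed
      also have "\<dots> = (\<integral>\<^sup>+x. ennreal (norm (g' x)) \<partial>lborel) * emeasure lborel {0..t}"
        using nn_integral_cmult_indicator[of "{0..t}" lborel "\<integral>\<^sup>+x. ennreal (norm (g' x)) \<partial>lborel"]
        by (simp add: mult.commute)
      also have "\<dots> < \<infinity>"
        using g'int t by (auto simp: integrable_iff_bounded ennreal_mult_less_top)
      finally show "(\<integral>\<^sup>+p. norm ((\<lambda>(x,s). indicator (box a b) (P x) * (indicator {0..t} s *\<^sub>R g' (x + s *\<^sub>R v))) p) \<partial>(lborel \<Otimes>\<^sub>M lborel)) < \<infinity>" .
    qed
    have "continuous_on UNIV (\<lambda>s. \<integral>y. indicator (box a b) (P y - s *\<^sub>R c) * g' y \<partial>lborel)"
      by (rule cont_shift_indicator_integral[OF g'int Pm ae])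
    moreover have "(\<integral>x. indicator (box a b) (P x) * g' (x + s *\<^sub>R v) \<partial>lborel)
        = (\<integral>y. indicator (box a b) (P y - s *\<^sub>R c) * g' y \<partial>lborel)" for s
    proof -
      have "(\<integral>y. indicator (box a b) (P y - s *\<^sub>R c) * g' y \<partial>lborel)
          = (\<integral>x. indicator (box a b) (P ((x + s *\<^sub>R v) - s *\<^sub>R v)) * g' (x + s *\<^sub>R v) \<partial>lborel)"
        using lborel_translate_integral'[where f="\<lambda>y. indicator (box a b) (P (y - s *\<^sub>R v)) * g' y" and c="s *\<^sub>R v"]
        by (simp add: Pdiff)
      then show ?thesis by simp
    qed
    ultimately show "continuous_on {0..1} (\<lambda>s. \<integral>x. indicator (box a b) (P x) * g' (x + s *\<^sub>R v) \<partial>lborel)"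
      by (auto intro: continuous_on_subset)
  qed
qed

lemma key_z_side:
  fixes m m' :: "'b::euclidean_space \<Rightarrow> real" and c :: 'b
  assumes mc: "continuous_on UNIV m" and m'c: "continuous_on UNIV m'"
    and mD: "\<And>z t. ((\<lambda>s. m (z + s *\<^sub>R c)) has_real_derivative m' (z + t *\<^sub>R c)) (at t)"
  shows "((\<lambda>t. ((\<integral>z. indicator (box a b) z * m (z + t *\<^sub>R c) \<partial>lborel) - (\<integral>z. indicator (box a b) z * m (z + 0 *\<^sub>R c) \<partial>lborel)) / t)
           \<longlongrightarrow> (\<integral>z. indicator (box a b) z * m' (z + 0 *\<^sub>R c) \<partial>lborel)) (at_right 0)"
proof -
  have mm[measurable]: "m \<in> borel_measurable borel" by (rule borel_measurable_continuous_onI[OF mc])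
  have m'm[measurable]: "m' \<in> borel_measurable borel" by (rule borel_measurable_continuous_onI[OF m'c])
  have cs: "continuous_on S (\<lambda>z. f (z + t *\<^sub>R c))" if "continuous_on UNIV f" for f :: "'b \<Rightarrow> real" and S t
    by (intro continuous_on_compose2[OF that] continuous_intros) auto
  show ?thesis
  proof (rule gen_deriv[where G'=m'])
    show "continuous_on UNIV m'" by fact
    show "\<And>x t. ((\<lambda>s. m (x + s *\<^sub>R c)) has_real_derivative m' (x + t *\<^sub>R c)) (at t)" by fact
    show "integrable lborel (\<lambda>z. indicator (box a b) z * m (z + t *\<^sub>R c))" for t
    proof (rule Bochner_Integration.integrable_bound[where f="\<lambda>z. indicator (cbox a b) z *\<^sub>R m (z + t *\<^sub>R c)"])
      show "integrable lborel (\<lambda>z. indicator (cbox a b) z *\<^sub>R m (z + t *\<^sub>R c))"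
        by (rule borel_integrable_compact) (auto intro: cs[OF mc])
      show "AE x in lborel. norm (indicator (box a b) x * m (x + t *\<^sub>R c)) \<le> norm (indicator (cbox a b) x *\<^sub>R m (x + t *\<^sub>R c))"
        using box_subset_cbox[of a b] by (auto simp: indicator_def)
    qed measurable
    show "integrable (lborel \<Otimes>\<^sub>M lborel) (\<lambda>(z,s). indicator (box a b) z * (indicator {0..t} s *\<^sub>R m' (z + s *\<^sub>R c)))" for t
    proof -
      have "integrable lborel (\<lambda>p::'b \<times> real. indicator (cbox a b \<times> {0..t}) p *\<^sub>R m' (fst p + snd p *\<^sub>R c))"
      proof (rule borel_integrable_compact)
        show "compact (cbox a b \<times> {0..t})" by (intro compact_Times) auto
        show "continuous_on (cbox a b \<times> {0..t}) (\<lambda>p. m' (fst p + snd p *\<^sub>R c))"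
          by (intro continuous_on_compose2[OF m'c] continuous_intros) auto
      qed
      then have "integrable lborel (\<lambda>(z,s). indicator (box a b) z * (indicator {0..t} s *\<^sub>R m' (z + s *\<^sub>R c)))"
      proof (rule Bochner_Integration.integrable_bound)
        show "AE x in lborel. norm ((\<lambda>(z,s). indicator (box a b) z * (indicator {0..t} s *\<^sub>R m' (z + s *\<^sub>R c))) x)
              \<le> norm (indicator (cbox a b \<times> {0..t}) x *\<^sub>R m' (fst x + snd x *\<^sub>R c))"
          using box_subset_cbox[of a b] by (intro AE_I2) (auto simp: indicator_def split: prod.splits)
        show "(\<lambda>(z,s). indicator (box a b) z * (indicator {0..t} s *\<^sub>R m' (z + s *\<^sub>R c))) \<in> borel_measurable lborel"
          by (subst lborel_prod[symmetric]) measurable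
      qed
      then show ?thesis by (simp add: lborel_prod)
    qed
    show "continuous_on {0..1} (\<lambda>s. \<integral>z. indicator (box a b) z * m' (z + s *\<^sub>R c) \<partial>lborel)"
    proof (rule continuous_on_sequentiallyI)
      fix u :: "nat \<Rightarrow> real" and s0 assume u01: "\<forall>n. u n \<in> {0..1}" and s0: "s0 \<in> {0..1}" and u: "u \<longlonglongrightarrow> s0"
      have "compact ((\<lambda>p. fst p + snd p *\<^sub>R c) ` (cbox a b \<times> {0..1}))"
        by (intro compact_continuous_image compact_Times continuous_intros) auto
      then obtain M where M0: "0 \<le> M" and M: "\<And>y. y \<in> (\<lambda>p. fst p + snd p *\<^sub>R c) ` (cbox a b \<times> {0..1}) \<Longrightarrow> norm (m' y) \<le> M"
        using continuous_on_compact_bound[of _ m'] continuous_on_subset[OF m'c] by (metis subset_UNIV)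
      have Mb: "norm (m' (z + s *\<^sub>R c)) \<le> M" if "z \<in> cbox a b" "s \<in> {0..1}" for z s
        using that by (intro M) (auto intro!: image_eqI[where x="(z,s)"])
      show "(\<lambda>n. \<integral>z. indicator (box a b) z * m' (z + u n *\<^sub>R c) \<partial>lborel) \<longlonglongrightarrow>
            (\<integral>z. indicator (box a b) z * m' (z + s0 *\<^sub>R c) \<partial>lborel)"
      proof (rule integral_dominated_convergence[where w="\<lambda>z. indicator (cbox a b) z *\<^sub>R M"])
        show "integrable lborel (\<lambda>z. indicator (cbox a b) z *\<^sub>R M)"
          by (rule borel_integrable_compact) auto
        show "AE z in lborel. norm (indicator (box a b) z * m' (z + u n *\<^sub>R c)) \<le> indicator (cbox a b) z *\<^sub>R M" for n
          using box_subset_cbox[of a b] Mb u01 M0 by (auto simp: indicator_def subset_iff)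
        show "AE z in lborel. (\<lambda>n. indicator (box a b) z * m' (z + u n *\<^sub>R c)) \<longlonglongrightarrow> indicator (box a b) z * m' (z + s0 *\<^sub>R c)"
        proof (intro AE_I2 tendsto_intros)
          fix z
          have "(\<lambda>n. z + u n *\<^sub>R c) \<longlonglongrightarrow> z + s0 *\<^sub>R c" by (intro tendsto_intros u)
          then show "(\<lambda>n. m' (z + u n *\<^sub>R c)) \<longlonglongrightarrow> m' (z + s0 *\<^sub>R c)"
            by (rule isCont_tendsto_compose[rotated]) (use m'c in \<open>simp add: continuous_on_eq_continuous_at\<close>)
        qed
      qed measurable
    qed
  qed
qed

lemma key_box:
  fixes P :: "'a::euclidean_space \<Rightarrow> 'b::euclidean_space" and g g' :: "'a \<Rightarrow> real"
    and m m' :: "'b \<Rightarrow> real" and v :: 'a and c :: 'b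
  assumes linP: "linear P" and Pv: "P v = c"
    and gpos: "\<And>x. g x > 0" and g'c: "continuous_on UNIV g'"
    and gD: "\<And>x t. ((\<lambda>s. g (x + s *\<^sub>R v)) has_real_derivative g' (x + t *\<^sub>R v)) (at t)"
    and gint: "integrable lborel g" and g'int: "integrable lborel g'"
    and mc: "continuous_on UNIV m" and m'c: "continuous_on UNIV m'"
    and mD: "\<And>z t. ((\<lambda>s. m (z + s *\<^sub>R c)) has_real_derivative m' (z + t *\<^sub>R c)) (at t)"
    and mnn: "\<And>z. m z \<ge> 0"
    and dens: "distr (density lborel g) lborel P = density lborel m"
  shows "(\<integral>x. indicator (box a b) (P x) * g' x \<partial>lborel) = (\<integral>z. indicator (box a b) z * m' z \<partial>lborel)"
proof -
  have blP: "bounded_linear P" using linP by (simp add: linear_conv_bounded_linear)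
  have Pm[measurable]: "P \<in> borel_measurable borel"
    by (intro borel_measurable_continuous_onI linear_continuous_on blP)
  have gm[measurable]: "g \<in> borel_measurable borel" using gint by (simp add: borel_measurable_integrable)
  have mm[measurable]: "m \<in> borel_measurable borel" by (rule borel_measurable_continuous_onI[OF mc])
  have Pdiff: "P (y - t *\<^sub>R v) = P y - t *\<^sub>R c" for y t
    using linP Pv by (simp add: linear_diff linear_scale)
  have eq: "(\<integral>x. indicator (box a b) (P x) * g (x + t *\<^sub>R v) \<partial>lborel) = (\<integral>z. indicator (box a b) z * m (z + t *\<^sub>R c) \<partial>lborel)" for t
  proof -
    have "(\<integral>x. indicator (box a b) (P x) * g (x + t *\<^sub>R v) \<partial>lborel)
        = (\<integral>y. indicator (box a b) (P (y - t *\<^sub>R v)) * g y \<partial>lborel)"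
      using lborel_translate_integral'[where f="\<lambda>y. indicator (box a b) (P (y - t *\<^sub>R v)) * g y" and c="t *\<^sub>R v"]
      by simp
    also have "\<dots> = (\<integral>y. g y *\<^sub>R indicator (box a b) (P y - t *\<^sub>R c) \<partial>lborel)"
      by (simp add: Pdiff mult.commute)
    also have "\<dots> = (\<integral>y. indicator (box a b) (P y - t *\<^sub>R c) \<partial>density lborel g)"
      by (rule integral_density[symmetric]) (use gpos less_imp_le in auto)
    also have "\<dots> = (\<integral>z. indicator (box a b) (z - t *\<^sub>R c) \<partial>distr (density lborel g) lborel P)"
      by (rule integral_distr[symmetric]) auto
    also have "\<dots> = (\<integral>z. indicator (box a b) (z - t *\<^sub>R c) \<partial>density lborel m)"
      unfolding dens ..
    also have "\<dots> = (\<integral>z. m z *\<^sub>R indicator (box a b) (z - t *\<^sub>R c) \<partial>lborel)"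
      by (rule integral_density) (use mnn in auto)
    also have "\<dots> = (\<integral>z. indicator (box a b) z * m (z + t *\<^sub>R c) \<partial>lborel)"
      using lborel_translate_integral'[where f="\<lambda>z. m z * indicator (box a b) (z - t *\<^sub>R c)" and c="t *\<^sub>R c"]
      by (simp add: mult.commute)
    finally show ?thesis .
  qed
  have L1: "((\<lambda>t. ((\<integral>x. indicator (box a b) (P x) * g (x + t *\<^sub>R v) \<partial>lborel) - (\<integral>x. indicator (box a b) (P x) * g (x + 0 *\<^sub>R v) \<partial>lborel)) / t)
           \<longlongrightarrow> (\<integral>x. indicator (box a b) (P x) * g' (x + 0 *\<^sub>R v) \<partial>lborel)) (at_right 0)"
    by (rule key_x_side[OF linP Pv gpos g'c gD gint g'int mm dens])
  have L2: "((\<lambda>t. ((\<integral>z. indicator (box a b) z * m (z + t *\<^sub>R c) \<partial>lborel) - (\<integral>z. indicator (box a b) z * m (z + 0 *\<^sub>R c) \<partial>lborel)) / t)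
           \<longlongrightarrow> (\<integral>z. indicator (box a b) z * m' (z + 0 *\<^sub>R c) \<partial>lborel)) (at_right 0)"
    by (rule key_z_side[OF mc m'c mD])
  have "(\<integral>x. indicator (box a b) (P x) * g' (x + 0 *\<^sub>R v) \<partial>lborel) = (\<integral>z. indicator (box a b) z * m' (z + 0 *\<^sub>R c) \<partial>lborel)"
    using L1 unfolding eq by (rule tendsto_unique[OF trivial_limit_at_right_real _ L2])
  then show ?thesis by simp
qed

lemma push_integral:
  fixes P :: "'a::euclidean_space \<Rightarrow> 'b::euclidean_space" and g :: "'a \<Rightarrow> real" and m :: "'b \<Rightarrow> real"
  assumes dens: "distr (density lborel g) lborel P = density lborel m"
    and [measurable]: "P \<in> borel_measurable borel" "g \<in> borel_measurable borel" "m \<in> borel_measurable borel"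
      "\<phi> \<in> borel_measurable borel"
    and gnn: "\<And>x. g x \<ge> 0" and mnn: "\<And>z. m z \<ge> 0"
  shows "integrable lborel (\<lambda>x. g x * \<phi> (P x)) \<longleftrightarrow> integrable lborel (\<lambda>z. m z * \<phi> z)"
    and "(\<integral>x. g x * \<phi> (P x) \<partial>lborel) = (\<integral>z. m z * \<phi> z \<partial>lborel)"
proof -
  have "integrable lborel (\<lambda>x. g x * \<phi> (P x)) \<longleftrightarrow> integrable (density lborel g) (\<lambda>x. \<phi> (P x))"
    by (subst integrable_density) (use gnn in auto)
  also have "\<dots> \<longleftrightarrow> integrable (distr (density lborel g) lborel P) \<phi>"
    by (subst integrable_distr_eq) auto
  also have "\<dots> \<longleftrightarrow> integrable (density lborel m) \<phi>" unfolding dens ..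
  also have "\<dots> \<longleftrightarrow> integrable lborel (\<lambda>z. m z * \<phi> z)"
    by (subst integrable_density) (use mnn in auto)
  finally show "integrable lborel (\<lambda>x. g x * \<phi> (P x)) \<longleftrightarrow> integrable lborel (\<lambda>z. m z * \<phi> z)" .
  have "(\<integral>x. g x * \<phi> (P x) \<partial>lborel) = (\<integral>x. \<phi> (P x) \<partial>density lborel g)"
    by (subst integral_density) (use gnn in auto)
  also have "\<dots> = (\<integral>z. \<phi> z \<partial>distr (density lborel g) lborel P)"
    by (subst integral_distr) auto
  also have "\<dots> = (\<integral>z. \<phi> z \<partial>density lborel m)" unfolding dens ..
  also have "\<dots> = (\<integral>z. m z * \<phi> z \<partial>lborel)"
    by (subst integral_density) (use mnn in auto)
  finally show "(\<integral>x. g x * \<phi> (P x) \<partial>lborel) = (\<integral>z. m z * \<phi> z \<partial>lborel)" .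
qed

lemma key_all:
  fixes P :: "'a::euclidean_space \<Rightarrow> 'b::euclidean_space" and g g' :: "'a \<Rightarrow> real"
    and m m' :: "'b \<Rightarrow> real" and v :: 'a and c :: 'b
  assumes linP: "linear P" and Pv: "P v = c"
    and gpos: "\<And>x. g x > 0" and g'c: "continuous_on UNIV g'"
    and gD: "\<And>x t. ((\<lambda>s. g (x + s *\<^sub>R v)) has_real_derivative g' (x + t *\<^sub>R v)) (at t)"
    and gint: "integrable lborel g" and g'int: "integrable lborel g'"
    and mc: "continuous_on UNIV m" and m'c: "continuous_on UNIV m'"
    and mD: "\<And>z t. ((\<lambda>s. m (z + s *\<^sub>R c)) has_real_derivative m' (z + t *\<^sub>R c)) (at t)"
    and mpos: "\<And>z. m z > 0"
    and dens: "distr (density lborel g) lborel P = density lborel m"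
  shows "integrable lborel (\<lambda>x. g x * (m' (P x) / m (P x)))"
    and "\<And>B. B \<in> sets borel \<Longrightarrow> (\<integral>x. indicator B (P x) * g' x \<partial>lborel) = (\<integral>x. indicator B (P x) * (g x * (m' (P x) / m (P x))) \<partial>lborel)"
proof -
  have blP: "bounded_linear P" using linP by (simp add: linear_conv_bounded_linear)
  have Pm[measurable]: "P \<in> borel_measurable borel"
    by (intro borel_measurable_continuous_onI linear_continuous_on blP)
  have gm[measurable]: "g \<in> borel_measurable borel" using gint by (simp add: borel_measurable_integrable)
  have g'm[measurable]: "g' \<in> borel_measurable borel" using g'int by (simp add: borel_measurable_integrable)
  have mm[measurable]: "m \<in> borel_measurable borel" by (rule borel_measurable_continuous_onI[OF mc])
  have m'm[measurable]: "m' \<in> borel_measurable borel" by (rule borel_measurable_continuous_onI[OF m'c])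
  have mnn: "\<And>z. m z \<ge> 0" using mpos less_imp_le by blast
  have gnn: "\<And>x. g x \<ge> 0" using gpos less_imp_le by blast
  define q where "q z = m' z / m z" for z
  have qm[measurable]: "q \<in> borel_measurable borel" unfolding q_def by measurable
  define f1 where "f1 x = max 0 (g' x) + g x * max 0 (- q (P x))" for x
  define f2 where "f2 x = max 0 (- g' x) + g x * max 0 (q (P x))" for x
  have f1m[measurable]: "f1 \<in> borel_measurable borel" unfolding f1_def by measurable
  have f2m[measurable]: "f2 \<in> borel_measurable borel" unfolding f2_def by measurable
  have f1nn: "f1 x \<ge> 0" for x unfolding f1_def using gnn by (intro add_nonneg_nonneg mult_nonneg_nonneg) auto
  have f2nn: "f2 x \<ge> 0" for x unfolding f2_def using gnn by (intro add_nonneg_nonneg mult_nonneg_nonneg) auto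
  have f12: "f1 x - f2 x = g' x - g x * q (P x)" for x
    unfolding f1_def f2_def by (auto simp: max_def algebra_simps)
  have mq: "m z * q z = m' z" for z using mpos[of z] by (simp add: q_def)
  have box_int: "integrable lborel (\<lambda>x. indicator (box a b) (P x) * f1 x)"
       "integrable lborel (\<lambda>x. indicator (box a b) (P x) * f2 x)"
       "integrable lborel (\<lambda>x. g x * (indicator (box a b) (P x) * q (P x)))" for a b
  proof -
    have mi: "integrable lborel (\<lambda>z. m z * (indicator (box a b) z * \<phi> (q z)))"
      if "\<And>y. \<bar>\<phi> y\<bar> \<le> \<bar>y\<bar>" and [measurable]: "\<phi> \<in> borel_measurable borel" for \<phi> :: "real \<Rightarrow> real"
    proof (rule Bochner_Integration.integrable_bound[where f="\<lambda>z. indicator (cbox a b) z *\<^sub>R m' z"])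
      show "integrable lborel (\<lambda>z. indicator (cbox a b) z *\<^sub>R m' z)"
        by (rule borel_integrable_compact) (auto intro: continuous_on_subset[OF m'c])
      show "AE z in lborel. norm (m z * (indicator (box a b) z * \<phi> (q z))) \<le> norm (indicator (cbox a b) z *\<^sub>R m' z)"
      proof (intro AE_I2)
        fix z
        have "\<bar>m z * \<phi> (q z)\<bar> \<le> \<bar>m z * q z\<bar>"
          using that(1)[of "q z"] mnn[of z] by (simp add: abs_mult mult_left_mono)
        then show "norm (m z * (indicator (box a b) z * \<phi> (q z))) \<le> norm (indicator (cbox a b) z *\<^sub>R m' z)"
          using box_subset_cbox[of a b] mq[of z] by (auto simp: indicator_def)
      qed
    qed measurable
    have gi: "integrable lborel (\<lambda>x. g x * (indicator (box a b) (P x) * \<phi> (q (P x))))"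
      if "\<And>y. \<bar>\<phi> y\<bar> \<le> \<bar>y\<bar>" and [measurable]: "\<phi> \<in> borel_measurable borel" for \<phi> :: "real \<Rightarrow> real"
      using push_integral(1)[OF dens Pm gm mm, of "\<lambda>z. indicator (box a b) z * \<phi> (q z)"] mi[OF that] gnn mnn
      by simp
    have gp: "integrable lborel (\<lambda>x. indicator (box a b) (P x) * \<phi> (g' x))"
      if "\<And>y. \<bar>\<phi> y\<bar> \<le> \<bar>y\<bar>" and [measurable]: "\<phi> \<in> borel_measurable borel" for \<phi> :: "real \<Rightarrow> real"
    proof (rule Bochner_Integration.integrable_bound[OF g'int])
      show "AE x in lborel. norm (indicator (box a b) (P x) * \<phi> (g' x)) \<le> norm (g' x)"
        using that(1) by (intro AE_I2) (auto simp: indicator_def)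
    qed measurable
    have "integrable lborel (\<lambda>x. indicator (box a b) (P x) * max 0 (g' x) + g x * (indicator (box a b) (P x) * max 0 (- q (P x))))"
      by (intro Bochner_Integration.integrable_add gp gi) auto
    then show "integrable lborel (\<lambda>x. indicator (box a b) (P x) * f1 x)"
      by (simp add: f1_def algebra_simps)
    have "integrable lborel (\<lambda>x. indicator (box a b) (P x) * max 0 (- g' x) + g x * (indicator (box a b) (P x) * max 0 (q (P x))))"
      by (intro Bochner_Integration.integrable_add gp gi) auto
    then show "integrable lborel (\<lambda>x. indicator (box a b) (P x) * f2 x)"
      by (simp add: f2_def algebra_simps)
    show "integrable lborel (\<lambda>x. g x * (indicator (box a b) (P x) * q (P x)))"
      using gi[of "\<lambda>y. y"] by simp
  qed
  have box_eq: "(\<integral>x. indicator (box a b) (P x) * f1 x \<partial>lborel) = (\<integral>x. indicator (box a b) (P x) * f2 x \<partial>lborel)" for a b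
  proof -
    have gi': "integrable lborel (\<lambda>x. indicator (box a b) (P x) * g' x)"
      by (rule Bochner_Integration.integrable_bound[OF g'int]) (auto simp: indicator_def)
    have "(\<integral>x. indicator (box a b) (P x) * f1 x \<partial>lborel) - (\<integral>x. indicator (box a b) (P x) * f2 x \<partial>lborel)
        = (\<integral>x. indicator (box a b) (P x) * g' x - g x * (indicator (box a b) (P x) * q (P x)) \<partial>lborel)"
    proof -
      have "(\<integral>x. indicator (box a b) (P x) * f1 x \<partial>lborel) - (\<integral>x. indicator (box a b) (P x) * f2 x \<partial>lborel)
          = (\<integral>x. indicator (box a b) (P x) * f1 x - indicator (box a b) (P x) * f2 x \<partial>lborel)"
        by (rule Bochner_Integration.integral_diff[symmetric]) (rule box_int)+
      also have "\<dots> = (\<integral>x. indicator (box a b) (P x) * g' x - g x * (indicator (box a b) (P x) * q (P x)) \<partial>lborel)"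
      proof (intro Bochner_Integration.integral_cong refl)
        fix x
        have "indicator (box a b) (P x) * f1 x - indicator (box a b) (P x) * f2 x = indicator (box a b) (P x) * (f1 x - f2 x)"
          by (simp only: right_diff_distrib)
        also have "\<dots> = indicator (box a b) (P x) * (g' x - g x * q (P x))" by (simp only: f12)
        finally show "indicator (box a b) (P x) * f1 x - indicator (box a b) (P x) * f2 x = indicator (box a b) (P x) * g' x - g x * (indicator (box a b) (P x) * q (P x))"
          by (simp add: algebra_simps)
      qed
      finally show ?thesis .
    qed
    also have "\<dots> = (\<integral>x. indicator (box a b) (P x) * g' x \<partial>lborel) - (\<integral>x. g x * (indicator (box a b) (P x) * q (P x)) \<partial>lborel)"
      by (rule Bochner_Integration.integral_diff) (auto intro: gi' box_int)
    also have "(\<integral>x. g x * (indicator (box a b) (P x) * q (P x)) \<partial>lborel) = (\<integral>z. m z * (indicator (box a b) z * q z) \<partial>lborel)"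
      by (rule push_integral(2)[OF dens Pm gm mm]) (auto simp: gnn mnn)
    also have "\<dots> = (\<integral>z. indicator (box a b) z * m' z \<partial>lborel)"
      by (intro Bochner_Integration.integral_cong refl) (auto simp: mq[symmetric])
    also have "(\<integral>x. indicator (box a b) (P x) * g' x \<partial>lborel) = (\<integral>z. indicator (box a b) z * m' z \<partial>lborel)"
      by (rule key_box[OF linP Pv gpos g'c gD gint g'int mc m'c mD mnn dens])
    finally show ?thesis by simp
  qed
  define N1 where "N1 = distr (density lborel f1) lborel P"
  define N2 where "N2 = distr (density lborel f2) lborel P"
  have emN: "emeasure (distr (density lborel f) lborel P) B = (\<integral>\<^sup>+x. ennreal (indicator B (P x) * f x) \<partial>lborel)"
    if [measurable]: "B \<in> sets borel" "f \<in> borel_measurable borel" and fnn: "\<And>x. f x \<ge> 0" for B f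
  proof -
    have "emeasure (distr (density lborel f) lborel P) B = emeasure (density lborel f) (P -` B \<inter> space (density lborel f))"
      by (rule emeasure_distr) auto
    also have "\<dots> = (\<integral>\<^sup>+x. ennreal (f x) * indicator (P -` B) x \<partial>lborel)"
      by (subst emeasure_density) (auto intro: measurable_sets_borel[OF Pm])
    also have "\<dots> = (\<integral>\<^sup>+x. ennreal (indicator B (P x) * f x) \<partial>lborel)"
      by (intro nn_integral_cong) (auto simp: indicator_def)
    finally show ?thesis .
  qed
  have emBox: "emeasure N1 (box a b) = emeasure N2 (box a b) \<and> emeasure N1 (box a b) \<noteq> \<infinity>" for a b
  proof -
    have "emeasure N1 (box a b) = ennreal (\<integral>x. indicator (box a b) (P x) * f1 x \<partial>lborel)"
      unfolding N1_def
      by (subst emN) (auto simp: f1nn intro!: nn_integral_eq_integral box_int)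
    moreover have "emeasure N2 (box a b) = ennreal (\<integral>x. indicator (box a b) (P x) * f2 x \<partial>lborel)"
      unfolding N2_def
      by (subst emN) (auto simp: f2nn intro!: nn_integral_eq_integral box_int)
    ultimately show ?thesis using box_eq[of a b] by simp
  qed
  have N12: "N1 = N2"
  proof (rule measure_eqI_generator_eq[where \<Omega>=UNIV and E="range (\<lambda>(a, b). box a b)"
        and A="\<lambda>i. box (- (real i *\<^sub>R One)) (real i *\<^sub>R One)"])
    show "Int_stable (range (\<lambda>(a, b). box a b :: 'b set))"
      by (auto simp: Int_stable_def box_Int_box)
    show "range (\<lambda>(a, b). box a b) \<subseteq> Pow UNIV" by auto
    show "X \<in> range (\<lambda>(a, b). box a b) \<Longrightarrow> emeasure N1 X = emeasure N2 X" for X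
      using emBox by auto
    have sb: "sets borel = sigma_sets UNIV (range (\<lambda>(a, b). box a b :: 'b set))"
      by (subst borel_eq_box) (simp add: sets_measure_of)
    show "sets N1 = sigma_sets UNIV (range (\<lambda>(a, b). box a b))" unfolding N1_def using sb by simp
    show "sets N2 = sigma_sets UNIV (range (\<lambda>(a, b). box a b))" unfolding N2_def using sb by simp
    show "range (\<lambda>i. box (- (real i *\<^sub>R One)) (real i *\<^sub>R One)) \<subseteq> range (\<lambda>(a, b). box a b :: 'b set)"
      by auto
    show "emeasure N1 (box (- (real i *\<^sub>R One)) (real i *\<^sub>R One)) \<noteq> \<infinity>" for i
      using emBox by blast
    show "(\<Union>i. box (- (real i *\<^sub>R One)) (real i *\<^sub>R One)) = (UNIV :: 'b set)"
    proof (intro set_eqI iffI)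
      fix z :: 'b
      obtain i :: nat where i: "norm z < real i" using reals_Archimedean2 by blast
      have "z \<in> box (- (real i *\<^sub>R One)) (real i *\<^sub>R One)"
        unfolding mem_box
      proof (intro ballI conjI)
        fix e :: 'b assume e: "e \<in> Basis"
        have "\<bar>z \<bullet> e\<bar> \<le> norm z" using Basis_le_norm[OF e] by simp
        then show "- (real i *\<^sub>R One) \<bullet> e < z \<bullet> e" "z \<bullet> e < real i *\<^sub>R One \<bullet> e"
          using i e by (auto simp: inner_simps)
      qed
      then show "z \<in> (\<Union>i. box (- (real i *\<^sub>R One)) (real i *\<^sub>R One))" by blast
    qed auto
  qed
  have nnEq: "(\<integral>\<^sup>+x. ennreal (indicator B (P x) * f1 x) \<partial>lborel) = (\<integral>\<^sup>+x. ennreal (indicator B (P x) * f2 x) \<partial>lborel)"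
    if [measurable]: "B \<in> sets borel" for B
    using arg_cong[OF N12, of "\<lambda>N. emeasure N B"] unfolding N1_def N2_def
    by (simp add: emN f1nn f2nn)
  have g'fin: "(\<integral>\<^sup>+x. ennreal (norm (g' x)) \<partial>lborel) < \<infinity>"
    using g'int by (simp add: integrable_iff_bounded)
  define Sp where "Sp = {z. 0 < m' z}"
  define Sn where "Sn = {z. m' z < 0}"
  have Spm[measurable]: "Sp \<in> sets borel" unfolding Sp_def by measurable
  have Snm[measurable]: "Sn \<in> sets borel" unfolding Sn_def by measurable
  have qpos: "z \<in> Sp \<Longrightarrow> q z > 0" for z using mpos[of z] by (simp add: Sp_def q_def)
  have qneg: "z \<in> Sn \<Longrightarrow> q z < 0" for z using mpos[of z] by (simp add: Sn_def q_def divide_neg_pos)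
  have qzero: "z \<notin> Sp \<Longrightarrow> z \<notin> Sn \<Longrightarrow> q z = 0" for z by (simp add: Sp_def Sn_def q_def)
  have finA: "(\<integral>\<^sup>+x. ennreal (indicator Sp (P x) * f2 x) \<partial>lborel) < \<infinity>"
  proof -
    have "(\<integral>\<^sup>+x. ennreal (indicator Sp (P x) * f2 x) \<partial>lborel) = (\<integral>\<^sup>+x. ennreal (indicator Sp (P x) * f1 x) \<partial>lborel)"
      by (rule nnEq[symmetric]) simp
    also have "\<dots> \<le> (\<integral>\<^sup>+x. ennreal (norm (g' x)) \<partial>lborel)"
      by (intro nn_integral_mono ennreal_leI) (auto simp: indicator_def f1_def dest!: qpos)
    finally show ?thesis using g'fin by (simp add: order_le_less_trans)
  qed
  have finB: "(\<integral>\<^sup>+x. ennreal (indicator Sn (P x) * f1 x) \<partial>lborel) < \<infinity>"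
  proof -
    have "(\<integral>\<^sup>+x. ennreal (indicator Sn (P x) * f1 x) \<partial>lborel) = (\<integral>\<^sup>+x. ennreal (indicator Sn (P x) * f2 x) \<partial>lborel)"
      by (rule nnEq) simp
    also have "\<dots> \<le> (\<integral>\<^sup>+x. ennreal (norm (g' x)) \<partial>lborel)"
      by (intro nn_integral_mono ennreal_leI) (auto simp: indicator_def f2_def dest!: qneg)
    finally show ?thesis using g'fin by (simp add: order_le_less_trans)
  qed
  have intgq: "integrable lborel (\<lambda>x. g x * q (P x))"
  proof (rule integrableI_bounded)
    show "(\<lambda>x. g x * q (P x)) \<in> borel_measurable lborel" by measurable
    have "(\<integral>\<^sup>+x. ennreal (norm (g x * q (P x))) \<partial>lborel)
        \<le> (\<integral>\<^sup>+x. ennreal (indicator Sp (P x) * f2 x) + ennreal (indicator Sn (P x) * f1 x) \<partial>lborel)"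
    proof (intro nn_integral_mono)
      fix x
      consider "P x \<in> Sp" | "P x \<in> Sn" | "P x \<notin> Sp" "P x \<notin> Sn" by blast
      then show "ennreal (norm (g x * q (P x))) \<le> ennreal (indicator Sp (P x) * f2 x) + ennreal (indicator Sn (P x) * f1 x)"
      proof cases
        case 1
        then have "\<not> P x \<in> Sn" by (auto simp: Sp_def Sn_def)
        with 1 qpos[OF 1] gnn[of x] show ?thesis
          by (auto simp: f2_def abs_mult intro!: ennreal_leI add_increasing2)
      next
        case 2
        then have "\<not> P x \<in> Sp" by (auto simp: Sp_def Sn_def)
        with 2 qneg[OF 2] gnn[of x] show ?thesis
          by (auto simp: f1_def abs_mult intro!: ennreal_leI add_increasing2)
      next
        case 3
        then show ?thesis using qzero[of "P x"] by simp
      qed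
    qed
    also have "\<dots> = (\<integral>\<^sup>+x. ennreal (indicator Sp (P x) * f2 x) \<partial>lborel) + (\<integral>\<^sup>+x. ennreal (indicator Sn (P x) * f1 x) \<partial>lborel)"
      by (rule nn_integral_add) auto
    also have "\<dots> < \<infinity>" using finA finB by simp
    finally show "(\<integral>\<^sup>+x. ennreal (norm (g x * q (P x))) \<partial>lborel) < \<infinity>" .
  qed
  then show "integrable lborel (\<lambda>x. g x * (m' (P x) / m (P x)))" by (simp add: q_def)
  have f1i: "integrable lborel f1"
  proof (rule Bochner_Integration.integrable_bound[where f="\<lambda>x. norm (g' x) + norm (g x * q (P x))"])
    show "integrable lborel (\<lambda>x. norm (g' x) + norm (g x * q (P x)))"
      using g'int intgq by auto
    show "AE x in lborel. norm (f1 x) \<le> norm (norm (g' x) + norm (g x * q (P x)))"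
    proof (intro AE_I2)
      fix x
      have "0 \<le> g x" by (rule gnn)
      have a: "max 0 (- q (P x)) \<le> \<bar>q (P x)\<bar>" and b: "0 \<le> max 0 (- q (P x))" by auto
      have "g x * max 0 (- q (P x)) \<le> g x * \<bar>q (P x)\<bar>" using mult_left_mono[OF a \<open>0 \<le> g x\<close>] .
      moreover have "0 \<le> g x * max 0 (- q (P x))" using mult_nonneg_nonneg[OF \<open>0 \<le> g x\<close> b] .
      moreover have "max 0 (- g' x) \<le> \<bar>g' x\<bar>" "0 \<le> max 0 (- g' x)" by auto
      ultimately show "norm (f1 x) \<le> norm (norm (g' x) + norm (g x * q (P x)))"
        using \<open>0 \<le> g x\<close> unfolding f1_def by (simp add: abs_mult)
    qed
  qed measurable
  have f2i: "integrable lborel f2"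
  proof (rule Bochner_Integration.integrable_bound[where f="\<lambda>x. norm (g' x) + norm (g x * q (P x))"])
    show "integrable lborel (\<lambda>x. norm (g' x) + norm (g x * q (P x)))"
      using g'int intgq by auto
    show "AE x in lborel. norm (f2 x) \<le> norm (norm (g' x) + norm (g x * q (P x)))"
    proof (intro AE_I2)
      fix x
      have "0 \<le> g x" by (rule gnn)
      have a: "max 0 (q (P x)) \<le> \<bar>q (P x)\<bar>" and b: "0 \<le> max 0 (q (P x))" by auto
      have "g x * max 0 (q (P x)) \<le> g x * \<bar>q (P x)\<bar>" using mult_left_mono[OF a \<open>0 \<le> g x\<close>] .
      moreover have "0 \<le> g x * max 0 (q (P x))" using mult_nonneg_nonneg[OF \<open>0 \<le> g x\<close> b] .
      moreover have "max 0 (g' x) \<le> \<bar>g' x\<bar>" "0 \<le> max 0 (g' x)" by auto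
      ultimately show "norm (f2 x) \<le> norm (norm (g' x) + norm (g x * q (P x)))"
        using \<open>0 \<le> g x\<close> unfolding f2_def by (simp add: abs_mult)
    qed
  qed measurable
  show "(\<integral>x. indicator B (P x) * g' x \<partial>lborel) = (\<integral>x. indicator B (P x) * (g x * (m' (P x) / m (P x))) \<partial>lborel)"
    if Bm[measurable]: "B \<in> sets borel" for B
  proof -
    have i1: "integrable lborel (\<lambda>x. indicator B (P x) * f1 x)"
      by (rule Bochner_Integration.integrable_bound[OF f1i]) (auto simp: indicator_def)
    have i2: "integrable lborel (\<lambda>x. indicator B (P x) * f2 x)"
      by (rule Bochner_Integration.integrable_bound[OF f2i]) (auto simp: indicator_def)
    have "ennreal (\<integral>x. indicator B (P x) * f1 x \<partial>lborel) = ennreal (\<integral>x. indicator B (P x) * f2 x \<partial>lborel)"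
      using nnEq[OF Bm] i1 i2 f1nn f2nn
      by (subst (1 2) nn_integral_eq_integral[symmetric]) auto
    then have e12: "(\<integral>x. indicator B (P x) * f1 x \<partial>lborel) = (\<integral>x. indicator B (P x) * f2 x \<partial>lborel)"
      using f1nn f2nn by (subst (asm) ennreal_inj) (auto intro!: integral_nonneg_AE)
    have ig': "integrable lborel (\<lambda>x. indicator B (P x) * g' x)"
      by (rule Bochner_Integration.integrable_bound[OF g'int]) (auto simp: indicator_def)
    have igq: "integrable lborel (\<lambda>x. indicator B (P x) * (g x * q (P x)))"
      by (rule Bochner_Integration.integrable_bound[OF intgq]) (auto simp: indicator_def)
    have "(\<integral>x. indicator B (P x) * g' x \<partial>lborel) - (\<integral>x. indicator B (P x) * (g x * q (P x)) \<partial>lborel)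
        = (\<integral>x. indicator B (P x) * g' x - indicator B (P x) * (g x * q (P x)) \<partial>lborel)"
      by (rule Bochner_Integration.integral_diff[symmetric, OF ig' igq])
    also have "\<dots> = (\<integral>x. indicator B (P x) * f1 x - indicator B (P x) * f2 x \<partial>lborel)"
    proof (intro Bochner_Integration.integral_cong refl)
      fix x
      show "indicator B (P x) * g' x - indicator B (P x) * (g x * q (P x)) = indicator B (P x) * f1 x - indicator B (P x) * f2 x"
        by (simp only: right_diff_distrib[symmetric] f12)
    qed
    also have "\<dots> = (\<integral>x. indicator B (P x) * f1 x \<partial>lborel) - (\<integral>x. indicator B (P x) * f2 x \<partial>lborel)"
      by (rule Bochner_Integration.integral_diff[OF i1 i2])
    also have "\<dots> = 0" using e12 by simp
    finally show ?thesis by (simp add: q_def)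
  qed
qed

lemma grad_inner_basis:
  fixes f :: "'a::euclidean_space \<Rightarrow> real"
  assumes "c \<in> Basis"
  shows "grad f x \<bullet> c = frechet_derivative f (at x) c"
proof -
  have "grad f x \<bullet> c = (\<Sum>b\<in>Basis. frechet_derivative f (at x) b * (b \<bullet> c))"
    unfolding grad_def by (simp add: inner_sum_left)
  also have "\<dots> = (\<Sum>b\<in>Basis. if b = c then frechet_derivative f (at x) b else 0)"
    by (rule sum.cong) (auto simp: inner_Basis assms)
  also have "\<dots> = frechet_derivative f (at x) c" using assms by simp
  finally show ?thesis .
qed

lemma smooth_fun_facts:
  assumes "smooth_fun U"
  shows "\<And>x. U differentiable (at x)"
    and "\<And>b. b \<in> Basis \<Longrightarrow> continuous_on UNIV (\<lambda>x. frechet_derivative U (at x) b)"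
proof -
  from assms show "\<And>x. U differentiable (at x)" by (cases rule: smooth_fun.cases) auto
  fix b :: 'a assume b: "b \<in> Basis"
  from assms have s: "smooth_fun (\<lambda>x. frechet_derivative U (at x) b)" using b by (cases rule: smooth_fun.cases) auto
  then have "\<forall>x. (\<lambda>x. frechet_derivative U (at x) b) differentiable (at x)" by (cases rule: smooth_fun.cases) auto
  then show "continuous_on UNIV (\<lambda>x. frechet_derivative U (at x) b)"
    by (simp add: continuous_at_imp_continuous_on differentiable_imp_continuous_within)
qed

lemma frechet_deriv_expand:
  fixes U :: "'a::euclidean_space \<Rightarrow> real"
  assumes "U differentiable (at x)"
  shows "frechet_derivative U (at x) v = (\<Sum>b\<in>Basis. (v \<bullet> b) * frechet_derivative U (at x) b)"
proof -
  have lin: "linear (frechet_derivative U (at x))"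
    using assms frechet_derivative_works has_derivative_linear by blast
  have "frechet_derivative U (at x) v = frechet_derivative U (at x) (\<Sum>b\<in>Basis. (v \<bullet> b) *\<^sub>R b)"
    by (simp only: euclidean_representation)
  also have "\<dots> = (\<Sum>b\<in>Basis. frechet_derivative U (at x) ((v \<bullet> b) *\<^sub>R b))"
    by (rule linear_sum[OF lin])
  also have "\<dots> = (\<Sum>b\<in>Basis. (v \<bullet> b) * frechet_derivative U (at x) b)"
    by (rule sum.cong) (simp_all only: linear_scale[OF lin] real_scaleR_def)
  finally show ?thesis .
qed

lemma cont_frechet_dir:
  fixes U :: "'a::euclidean_space \<Rightarrow> real"
  assumes d: "\<And>x. U differentiable (at x)"
    and c: "\<And>b. b \<in> Basis \<Longrightarrow> continuous_on UNIV (\<lambda>x. frechet_derivative U (at x) b)"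
  shows "continuous_on UNIV (\<lambda>x. frechet_derivative U (at x) v)"
proof -
  have "continuous_on UNIV (\<lambda>x. \<Sum>b\<in>Basis. (v \<bullet> b) * frechet_derivative U (at x) b)"
    by (intro continuous_intros c)
  moreover have "(\<lambda>x. \<Sum>b\<in>Basis. (v \<bullet> b) * frechet_derivative U (at x) b) = (\<lambda>x. frechet_derivative U (at x) v)"
    by (rule ext) (rule frechet_deriv_expand[OF d, symmetric])
  ultimately show ?thesis by metis
qed

lemma line_deriv:
  fixes U :: "'a::euclidean_space \<Rightarrow> real"
  assumes d: "\<And>x. U differentiable (at x)"
  shows "((\<lambda>s. U (x + s *\<^sub>R v)) has_real_derivative frechet_derivative U (at (x + t *\<^sub>R v)) v) (at t)"
proof -
  have U: "(U has_derivative frechet_derivative U (at (x + t *\<^sub>R v))) (at (x + t *\<^sub>R v))"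
    using d frechet_derivative_works by blast
  have lin: "linear (frechet_derivative U (at (x + t *\<^sub>R v)))" using has_derivative_linear[OF U] .
  have l: "((\<lambda>s. x + s *\<^sub>R v) has_derivative (\<lambda>h. h *\<^sub>R v)) (at t)"
    by (auto intro!: derivative_eq_intros)
  have "((\<lambda>s. U (x + s *\<^sub>R v)) has_derivative (\<lambda>h. frechet_derivative U (at (x + t *\<^sub>R v)) (h *\<^sub>R v))) (at t)"
    using has_derivative_compose[OF l U] by (simp add: o_def)
  then have "((\<lambda>s. U (x + s *\<^sub>R v)) has_derivative (\<lambda>h. h *\<^sub>R frechet_derivative U (at (x + t *\<^sub>R v)) v)) (at t)"
    by (rule has_derivative_eq_rhs) (simp add: linear_scale[OF lin])
  then show ?thesis by (simp add: has_real_derivative_iff_has_vector_derivative has_vector_derivative_def)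
qed

lemma linear_cg_map: "linear (cg_map \<zeta>1 \<zeta>2)"
  unfolding cg_map_def
  by (rule linearI) (auto simp: scaleR_add_right sum.distrib scaleR_sum_right mult.commute)

lemma partition_pos:
  fixes U :: "'a::euclidean_space \<Rightarrow> real"
  assumes "integrable lborel (\<lambda>x. exp (- \<beta> * U x))"
  shows "partition_fn \<beta> U > 0"
proof -
  have nn: "0 \<le> (\<integral>x. exp (- \<beta> * U x) \<partial>lborel)" by (rule integral_nonneg_AE) auto
  have "(\<integral>x. exp (- \<beta> * U x) \<partial>lborel) \<noteq> 0"
  proof
    assume "(\<integral>x. exp (- \<beta> * U x) \<partial>lborel) = 0"
    then have "AE x in lborel. exp (- \<beta> * U x) = 0"
      using integral_nonneg_eq_0_iff_AE[OF assms] by auto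
    then have "AE x in (lborel :: 'a measure). False" by simp
    then have "space (lborel :: 'a measure) \<in> null_sets lborel" by (simp add: AE_iff_null_sets eventually_ae_filter)
    then show False by (auto simp: null_sets_def emeasure_lborel_UNIV)
  qed
  with nn show ?thesis unfolding partition_fn_def by linarith
qed

lemma dir_main:
  fixes \<beta> :: real
    and U :: "real^3^'n::finite \<Rightarrow> real"
    and \<zeta>1 \<zeta>2 :: "'n \<Rightarrow> real"
    and mubar :: "(real^3) \<times> (real^3) \<Rightarrow> real"
    and h :: "real^3^'n \<Rightarrow> (real^3) \<times> (real^3)" and v :: "real^3^'n" and c :: "(real^3) \<times> (real^3)"
  assumes beta_pos: "\<beta> > 0"
    and U_smooth: "smooth_fun U"
    and Z_finite: "integrable lborel (\<lambda>x. exp (- \<beta> * U x))"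
    and mubar_density: "distr (gibbs \<beta> U) lborel (cg_map \<zeta>1 \<zeta>2) = density lborel (\<lambda>z. ennreal (mubar z))"
    and mubar_pos: "\<forall>z. mubar z > 0"
    and mubar_C1: "C1_fun mubar"
    and c: "c \<in> Basis" and Pv: "cg_map \<zeta>1 \<zeta>2 v = c"
    and hc: "\<And>x. h x \<bullet> c = - frechet_derivative U (at x) v"
    and hint: "integrable (gibbs \<beta> U) h"
  shows "AE x in gibbs \<beta> U. real_cond_exp (gibbs \<beta> U) (vimage_algebra (space (gibbs \<beta> U)) (cg_map \<zeta>1 \<zeta>2) borel) (\<lambda>y. h y \<bullet> c) x
           = pmf_force \<beta> (partition_fn \<beta> U) mubar (cg_map \<zeta>1 \<zeta>2 x) \<bullet> c"
proof -
  define P where "P = cg_map \<zeta>1 \<zeta>2"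
  define Zc where "Zc = partition_fn \<beta> U"
  define g0 where "g0 x = exp (- \<beta> * U x) / Zc" for x
  define dU where "dU x = frechet_derivative U (at x)" for x
  define g' where "g' y = g0 y * (- \<beta> * dU y v)" for y
  define m' where "m' z = frechet_derivative mubar (at z) c" for z
  have Zpos: "Zc > 0" unfolding Zc_def by (rule partition_pos[OF Z_finite])
  have gibbs_eq: "gibbs \<beta> U = density lborel g0"
    unfolding gibbs_def g0_def Zc_def ..
  have linP: "linear P" unfolding P_def by (rule linear_cg_map)
  have blP: "bounded_linear P" using linP by (simp add: linear_conv_bounded_linear)
  have Pm[measurable]: "P \<in> borel_measurable borel"
    by (intro borel_measurable_continuous_onI linear_continuous_on blP)
  note Ud = smooth_fun_facts(1)[OF U_smooth]
  note Uc = smooth_fun_facts(2)[OF U_smooth]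
  have Ucont: "continuous_on UNIV U"
    using Ud by (simp add: continuous_at_imp_continuous_on differentiable_imp_continuous_within)
  have md: "\<And>z. mubar differentiable (at z)" and mdc: "\<And>b. b \<in> Basis \<Longrightarrow> continuous_on UNIV (\<lambda>x. frechet_derivative mubar (at x) b)"
    using mubar_C1 by (auto simp: C1_fun_def)
  have mc: "continuous_on UNIV mubar"
    using md by (simp add: continuous_at_imp_continuous_on differentiable_imp_continuous_within)
  have m'c: "continuous_on UNIV m'" unfolding m'_def by (rule mdc[OF c])
  have mD: "((\<lambda>s. mubar (z + s *\<^sub>R c)) has_real_derivative m' (z + t *\<^sub>R c)) (at t)" for z t
    unfolding m'_def by (rule line_deriv[OF md])
  have gpos: "g0 x > 0" for x unfolding g0_def using Zpos by simp
  have g0c: "continuous_on UNIV g0" unfolding g0_def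
    using Zpos by (intro continuous_intros continuous_on_compose2[OF Ucont]) auto
  have dUc: "continuous_on UNIV (\<lambda>x. dU x v)" unfolding dU_def by (rule cont_frechet_dir[OF Ud Uc])
  have g'c: "continuous_on UNIV g'" unfolding g'_def by (intro continuous_intros g0c dUc)
  have gD: "((\<lambda>s. g0 (x + s *\<^sub>R v)) has_real_derivative g' (x + t *\<^sub>R v)) (at t)" for x t
  proof -
    have "((\<lambda>s. U (x + s *\<^sub>R v)) has_real_derivative dU (x + t *\<^sub>R v) v) (at t)"
      unfolding dU_def by (rule line_deriv[OF Ud])
    then have "((\<lambda>s. exp (- \<beta> * U (x + s *\<^sub>R v)) / Zc) has_real_derivative (exp (- \<beta> * U (x + t *\<^sub>R v)) * (- \<beta> * dU (x + t *\<^sub>R v) v)) / Zc) (at t)"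
      using Zpos by (auto intro!: derivative_eq_intros)
    then show ?thesis unfolding g'_def g0_def using Zpos by (simp add: field_simps)
  qed
  have gint: "integrable lborel g0" unfolding g0_def using Z_finite by simp
  have hm[measurable]: "h \<in> borel_measurable borel"
    using hint by (simp add: gibbs_eq borel_measurable_integrable)
  have g0m[measurable]: "g0 \<in> borel_measurable borel" by (rule borel_measurable_continuous_onI[OF g0c])
  have g0hc: "integrable lborel (\<lambda>x. g0 x * (h x \<bullet> c))"
  proof -
    have "integrable lborel (\<lambda>x. g0 x *\<^sub>R h x)"
      using hint unfolding gibbs_eq by (subst (asm) integrable_density) (use gpos less_imp_le in auto)
    then have "integrable lborel (\<lambda>x. (g0 x *\<^sub>R h x) \<bullet> c)" by (rule integrable_inner_left)
    then show ?thesis by simp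
  qed
  have g'hc: "g' x = \<beta> * (g0 x * (h x \<bullet> c))" for x unfolding g'_def dU_def by (simp add: hc)
  have g'int: "integrable lborel g'"
    unfolding g'hc using g0hc by simp
  have dens: "distr (density lborel g0) lborel P = density lborel mubar"
    using mubar_density unfolding gibbs_eq P_def .
  note KA = key_all[OF linP Pv[folded P_def] gpos g'c gD gint g'int mc m'c mD _ dens]
  have KAa: "integrable lborel (\<lambda>x. g0 x * (m' (P x) / mubar (P x)))" using KA(1) mubar_pos by auto
  have KAb: "(\<integral>x. indicator B (P x) * g' x \<partial>lborel) = (\<integral>x. indicator B (P x) * (g0 x * (m' (P x) / mubar (P x))) \<partial>lborel)"
    if "B \<in> sets borel" for B using KA(2)[OF _ that] mubar_pos by auto
  have Fc: "pmf_force \<beta> Zc mubar z \<bullet> c = m' z / (\<beta> * mubar z)" for z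
  proof -
    have mz: "(mubar has_derivative frechet_derivative mubar (at z)) (at z)"
      using md frechet_derivative_works by blast
    have "(pmf_potential \<beta> Zc mubar has_derivative (\<lambda>k. - (1/\<beta>) * (frechet_derivative mubar (at z) k / mubar z))) (at z)"
      unfolding pmf_potential_def[abs_def]
      using mubar_pos[rule_format, of z] beta_pos
      by (auto intro!: derivative_eq_intros mz simp: field_simps)
    then have "frechet_derivative (pmf_potential \<beta> Zc mubar) (at z) = (\<lambda>k. - (1/\<beta>) * (frechet_derivative mubar (at z) k / mubar z))"
      by (rule frechet_derivative_at[symmetric])
    then show ?thesis
      unfolding pmf_force_def using grad_inner_basis[OF c, of "pmf_potential \<beta> Zc mubar" z]
      by (simp add: m'_def field_simps)
  qed
  define F where "F = vimage_algebra (space (gibbs \<beta> U)) P borel"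
  define qq where "qq z = m' z / (\<beta> * mubar z)" for z
  have m'm[measurable]: "m' \<in> borel_measurable borel" by (rule borel_measurable_continuous_onI[OF m'c])
  have mm[measurable]: "mubar \<in> borel_measurable borel" by (rule borel_measurable_continuous_onI[OF mc])
  have qqm[measurable]: "qq \<in> borel_measurable borel" unfolding qq_def by measurable
  have sp: "space (gibbs \<beta> U) = UNIV" by (simp add: gibbs_eq)
  have setsF: "sets F = {P -` A \<inter> space (gibbs \<beta> U) | A. A \<in> sets borel}"
    unfolding F_def by (rule sets_vimage_algebra2) auto
  have fin: "finite_measure (gibbs \<beta> U)"
  proof (rule finite_measureI)
    have "emeasure (gibbs \<beta> U) (space (gibbs \<beta> U)) = (\<integral>\<^sup>+x. ennreal (g0 x) \<partial>lborel)"
      unfolding gibbs_eq by (subst emeasure_density) auto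
    also have "\<dots> = ennreal (\<integral>x. g0 x \<partial>lborel)"
      by (rule nn_integral_eq_integral[OF gint]) (use gpos less_imp_le in auto)
    finally show "emeasure (gibbs \<beta> U) (space (gibbs \<beta> U)) \<noteq> \<infinity>" by simp
  qed
  have subalg: "subalgebra (gibbs \<beta> U) F"
    unfolding subalgebra_def
  proof
    show "space F = space (gibbs \<beta> U)" unfolding F_def by simp
    show "sets F \<subseteq> sets (gibbs \<beta> U)"
      unfolding setsF sp by (auto simp: gibbs_eq intro: measurable_sets_borel[OF Pm])
  qed
  interpret sfs: sigma_finite_subalgebra "gibbs \<beta> U" F
    by (rule sigma_finite_subalgebra.intro[OF subalg finite_measure.axioms(1)[OF finite_measure_restr_to_subalg[OF subalg fin]]])
  have main: "AE x in gibbs \<beta> U. real_cond_exp (gibbs \<beta> U) F (\<lambda>y. h y \<bullet> c) x = qq (P x)"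
  proof (rule sfs.real_cond_exp_charact)
    fix A assume "A \<in> sets F"
    then obtain B where B[measurable]: "B \<in> sets borel" and A: "A = P -` B \<inter> space (gibbs \<beta> U)"
      unfolding setsF by auto
    have indA: "indicator A x = indicator B (P x)" for x :: "real^3^'n"
      unfolding A sp by (simp add: indicator_def)
    have "(\<integral>x\<in>A. h x \<bullet> c \<partial>gibbs \<beta> U) = (\<integral>x. indicator B (P x) * (h x \<bullet> c) \<partial>density lborel g0)"
      unfolding set_lebesgue_integral_def gibbs_eq indA by simp
    also have "\<dots> = (\<integral>x. g0 x * (indicator B (P x) * (h x \<bullet> c)) \<partial>lborel)"
      by (subst integral_density) (use gpos less_imp_le in auto)
    also have "\<dots> = (\<integral>x. indicator B (P x) * g' x / \<beta> \<partial>lborel)"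
      by (intro Bochner_Integration.integral_cong refl) (use beta_pos in \<open>simp add: g'hc field_simps\<close>)
    also have "\<dots> = (\<integral>x. indicator B (P x) * g' x \<partial>lborel) / \<beta>"
      by simp
    also have "\<dots> = (\<integral>x. indicator B (P x) * (g0 x * (m' (P x) / mubar (P x))) \<partial>lborel) / \<beta>"
      by (simp add: KAb)
    also have "\<dots> = (\<integral>x. g0 x * (indicator B (P x) * qq (P x)) \<partial>lborel)"
      unfolding qq_def
      by (subst integral_divide_zero[symmetric]) (intro Bochner_Integration.integral_cong refl, use beta_pos in \<open>simp add: field_simps\<close>)
    also have "\<dots> = (\<integral>x. indicator B (P x) * qq (P x) \<partial>density lborel g0)"
      by (subst integral_density) (use gpos less_imp_le in auto)
    also have "\<dots> = (\<integral>x\<in>A. qq (P x) \<partial>gibbs \<beta> U)"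
      unfolding set_lebesgue_integral_def gibbs_eq indA by simp
    finally show "(\<integral>x\<in>A. h x \<bullet> c \<partial>gibbs \<beta> U) = (\<integral>x\<in>A. qq (P x) \<partial>gibbs \<beta> U)" .
  next
    show "integrable (gibbs \<beta> U) (\<lambda>y. h y \<bullet> c)" using hint by (rule integrable_inner_left)
  next
    have "integrable lborel (\<lambda>x. g0 x * (m' (P x) / mubar (P x)) / \<beta>)"
      by (rule Bochner_Integration.integrable_divide[OF KAa])
    then have "integrable lborel (\<lambda>x. g0 x *\<^sub>R qq (P x))"
      by (rule Bochner_Integration.integrable_cong[THEN iffD1, rotated 2]) (auto simp: qq_def field_simps)
    then show "integrable (gibbs \<beta> U) (\<lambda>x. qq (P x))"
      unfolding gibbs_eq by (subst integrable_density) (use gpos less_imp_le in auto)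
  next
    show "(\<lambda>x. qq (P x)) \<in> borel_measurable F"
      unfolding F_def by (rule measurable_compose[OF measurable_vimage_algebra1 qqm]) auto
  qed
  have Fc': "pmf_force \<beta> (partition_fn \<beta> U) mubar (P x) \<bullet> c = qq (P x)" for x
    using Fc[of "P x"] by (simp add: Zc_def qq_def)
  show ?thesis
    using main unfolding F_def P_def[symmetric] Fc' .
qed

lemma force_sum_inner:
  fixes U :: "real^3^'n::finite \<Rightarrow> real" and e :: "real^3"
  assumes e: "e \<in> Basis" and d: "U differentiable (at x)"
  shows "(\<Sum>j\<in>UNIV. bb j *\<^sub>R force U j x) \<bullet> e = - frechet_derivative U (at x) (\<Sum>j\<in>UNIV. bb j *\<^sub>R axis j e)"
proof -
  have lin: "linear (frechet_derivative U (at x))"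
    using d frechet_derivative_works has_derivative_linear by blast
  have "(\<Sum>j\<in>UNIV. bb j *\<^sub>R force U j x) \<bullet> e = (\<Sum>j\<in>UNIV. bb j * (force U j x \<bullet> e))"
    by (simp add: inner_sum_left)
  also have "\<dots> = (\<Sum>j\<in>UNIV. bb j * (- frechet_derivative U (at x) (axis j e)))"
  proof (rule sum.cong[OF refl])
    fix j
    have "force U j x \<bullet> e = - (grad U x \<bullet> axis j e)"
      unfolding force_def by (simp add: inner_axis)
    also have "\<dots> = - frechet_derivative U (at x) (axis j e)"
      using e by (simp add: grad_inner_basis)
    finally show "bb j * (force U j x \<bullet> e) = bb j * (- frechet_derivative U (at x) (axis j e))" by simp
  qed
  also have "\<dots> = - (\<Sum>j\<in>UNIV. frechet_derivative U (at x) (bb j *\<^sub>R axis j e))"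
    by (simp add: linear_scale[OF lin] sum_negf)
  also have "\<dots> = - frechet_derivative U (at x) (\<Sum>j\<in>UNIV. bb j *\<^sub>R axis j e)"
    by (simp add: linear_sum[OF lin])
  finally show ?thesis .
qed

lemma vec_sum_axis_nth: "(\<Sum>k\<in>UNIV. bb k *\<^sub>R axis k e) $ j = bb j *\<^sub>R (e :: real^3)"
  by (simp add: sum_component axis_def if_distrib cong: if_cong)

lemma cg_map_v:
  fixes \<zeta>1 \<zeta>2 bb :: "'n::finite \<Rightarrow> real" and e :: "real^3"
  shows "cg_map \<zeta>1 \<zeta>2 (\<Sum>k\<in>UNIV. bb k *\<^sub>R axis k e) = ((\<Sum>j\<in>UNIV. \<zeta>1 j * bb j) *\<^sub>R e, (\<Sum>j\<in>UNIV. \<zeta>2 j * bb j) *\<^sub>R e)"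
  unfolding cg_map_def vec_sum_axis_nth by (simp add: scaleR_sum_left)


lemma gen_thm:
  fixes \<beta> :: real
    and U :: "real^3^'n::finite \<Rightarrow> real"
    and \<zeta>1 \<zeta>2 b1 b2 :: "'n \<Rightarrow> real"
    and mubar :: "(real^3) \<times> (real^3) \<Rightarrow> real"
  assumes beta_pos: "\<beta> > 0"
    and U_smooth: "smooth_fun U"
    and Z_finite: "integrable lborel (\<lambda>x. exp (- \<beta> * U x))"
    and mubar_density: "distr (gibbs \<beta> U) lborel (cg_map \<zeta>1 \<zeta>2) = density lborel (\<lambda>z. ennreal (mubar z))"
    and mubar_pos: "\<forall>z. mubar z > 0"
    and mubar_C1: "C1_fun mubar"
    and s11: "(\<Sum>j\<in>UNIV. \<zeta>1 j * b1 j) = 1" and s21: "(\<Sum>j\<in>UNIV. \<zeta>2 j * b1 j) = 0"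
    and s12: "(\<Sum>j\<in>UNIV. \<zeta>1 j * b2 j) = 0" and s22: "(\<Sum>j\<in>UNIV. \<zeta>2 j * b2 j) = 1"
    and hint: "integrable (gibbs \<beta> U) (\<lambda>x. ((\<Sum>j\<in>UNIV. b1 j *\<^sub>R force U j x), (\<Sum>j\<in>UNIV. b2 j *\<^sub>R force U j x)))"
  shows "is_cond_exp_given (gibbs \<beta> U) (cg_map \<zeta>1 \<zeta>2) (\<lambda>x. ((\<Sum>j\<in>UNIV. b1 j *\<^sub>R force U j x), (\<Sum>j\<in>UNIV. b2 j *\<^sub>R force U j x)))
           (pmf_force \<beta> (partition_fn \<beta> U) mubar)"
  unfolding is_cond_exp_given_def
proof
  fix c :: "(real^3) \<times> (real^3)" assume c: "c \<in> Basis"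
  note Ud = smooth_fun_facts(1)[OF U_smooth]
  from c consider e where "e \<in> Basis" "c = (e, 0)" | e where "e \<in> Basis" "c = (0, e)"
    unfolding Basis_prod_def by auto
  then show "AE x in gibbs \<beta> U. real_cond_exp (gibbs \<beta> U) (vimage_algebra (space (gibbs \<beta> U)) (cg_map \<zeta>1 \<zeta>2) borel)
          (\<lambda>y. (\<Sum>j\<in>UNIV. b1 j *\<^sub>R force U j y, \<Sum>j\<in>UNIV. b2 j *\<^sub>R force U j y) \<bullet> c) x =
         pmf_force \<beta> (partition_fn \<beta> U) mubar (cg_map \<zeta>1 \<zeta>2 x) \<bullet> c"
  proof cases
    case (1 e)
    show ?thesis
    proof (rule dir_main[OF beta_pos U_smooth Z_finite mubar_density mubar_pos mubar_C1 c _ _ hint])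
      show "cg_map \<zeta>1 \<zeta>2 (\<Sum>k\<in>UNIV. b1 k *\<^sub>R axis k e) = c"
        using 1 by (simp add: cg_map_v s11 s21)
      show "(\<Sum>j\<in>UNIV. b1 j *\<^sub>R force U j x, \<Sum>j\<in>UNIV. b2 j *\<^sub>R force U j x) \<bullet> c = - frechet_derivative U (at x) (\<Sum>k\<in>UNIV. b1 k *\<^sub>R axis k e)" for x
        using 1 force_sum_inner[OF 1(1) Ud] by (simp add: inner_prod_def)
    qed
  next
    case (2 e)
    show ?thesis
    proof (rule dir_main[OF beta_pos U_smooth Z_finite mubar_density mubar_pos mubar_C1 c _ _ hint])
      show "cg_map \<zeta>1 \<zeta>2 (\<Sum>k\<in>UNIV. b2 k *\<^sub>R axis k e) = c"
        using 2 by (simp add: cg_map_v s12 s22)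
      show "(\<Sum>j\<in>UNIV. b1 j *\<^sub>R force U j x, \<Sum>j\<in>UNIV. b2 j *\<^sub>R force U j x) \<bullet> c = - frechet_derivative U (at x) (\<Sum>k\<in>UNIV. b2 k *\<^sub>R axis k e)" for x
        using 2 force_sum_inner[OF 2(1) Ud] by (simp add: inner_prod_def)
    qed
  qed
qed

theorem mainTheorem6:
  fixes \<beta> :: real
    and U :: "real^3^'n::finite \<Rightarrow> real"
    and \<zeta>1 \<zeta>2 :: "'n \<Rightarrow> real"
    and mubar :: "(real^3) \<times> (real^3) \<Rightarrow> real"
  assumes beta_pos: "\<beta> > 0"
    and U_smooth: "smooth_fun U"
    and Z_finite: "integrable lborel (\<lambda>x. exp (- \<beta> * U x))"
    and sum1: "(\<Sum>j\<in>UNIV. \<zeta>1 j) = 1"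
    and sum2: "(\<Sum>j\<in>UNIV. \<zeta>2 j) = 1"
    and disjoint: "\<forall>j. \<zeta>1 j * \<zeta>2 j = 0"
    and mubar_density: "distr (gibbs \<beta> U) lborel (cg_map \<zeta>1 \<zeta>2) = density lborel (\<lambda>z. ennreal (mubar z))"
    and mubar_pos: "\<forall>z. mubar z > 0"
    and mubar_C1: "C1_fun mubar"
  shows
    "(let h = (\<lambda>x. ((\<Sum>j\<in>UNIV. (\<zeta>1 j / (\<Sum>k\<in>UNIV. (\<zeta>1 k)\<^sup>2)) *\<^sub>R force U j x),
                      (\<Sum>j\<in>UNIV. (\<zeta>2 j / (\<Sum>k\<in>UNIV. (\<zeta>2 k)\<^sup>2)) *\<^sub>R force U j x)))
      in integrable (gibbs \<beta> U) h \<longrightarrow>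
         is_cond_exp_given (gibbs \<beta> U) (cg_map \<zeta>1 \<zeta>2) h
           (pmf_force \<beta> (partition_fn \<beta> U) mubar))
   \<and> (let h = (\<lambda>x. ((\<Sum>j\<in>{j. \<zeta>1 j \<noteq> 0}. force U j x),
                      (\<Sum>j\<in>{j. \<zeta>2 j \<noteq> 0}. force U j x)))
      in integrable (gibbs \<beta> U) h \<longrightarrow>
         is_cond_exp_given (gibbs \<beta> U) (cg_map \<zeta>1 \<zeta>2) h
           (pmf_force \<beta> (partition_fn \<beta> U) mubar))"
proof -
  note G = gen_thm[OF beta_pos U_smooth Z_finite mubar_density mubar_pos mubar_C1]
  have dis12: "\<zeta>2 j * \<zeta>1 j = 0" for j using disjoint by (simp add: mult.commute)
  define S1 where "S1 = (\<Sum>k\<in>UNIV. (\<zeta>1 k)\<^sup>2)"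
  define S2 where "S2 = (\<Sum>k\<in>UNIV. (\<zeta>2 k)\<^sup>2)"
  have S1: "S1 \<noteq> 0"
  proof
    assume "S1 = 0"
    then have "\<forall>k\<in>UNIV. (\<zeta>1 k)\<^sup>2 = 0" unfolding S1_def by (subst (asm) sum_nonneg_eq_0_iff) auto
    then have "(\<Sum>j\<in>UNIV. \<zeta>1 j) = 0" by simp
    with sum1 show False by simp
  qed
  have S2: "S2 \<noteq> 0"
  proof
    assume "S2 = 0"
    then have "\<forall>k\<in>UNIV. (\<zeta>2 k)\<^sup>2 = 0" unfolding S2_def by (subst (asm) sum_nonneg_eq_0_iff) auto
    then have "(\<Sum>j\<in>UNIV. \<zeta>2 j) = 0" by simp
    with sum2 show False by simp
  qed
  have part1: "integrable (gibbs \<beta> U) (\<lambda>x. ((\<Sum>j\<in>UNIV. (\<zeta>1 j / S1) *\<^sub>R force U j x), (\<Sum>j\<in>UNIV. (\<zeta>2 j / S2) *\<^sub>R force U j x))) \<longrightarrow>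
         is_cond_exp_given (gibbs \<beta> U) (cg_map \<zeta>1 \<zeta>2) (\<lambda>x. ((\<Sum>j\<in>UNIV. (\<zeta>1 j / S1) *\<^sub>R force U j x), (\<Sum>j\<in>UNIV. (\<zeta>2 j / S2) *\<^sub>R force U j x)))
           (pmf_force \<beta> (partition_fn \<beta> U) mubar)"
  proof
    assume i: "integrable (gibbs \<beta> U) (\<lambda>x. ((\<Sum>j\<in>UNIV. (\<zeta>1 j / S1) *\<^sub>R force U j x), (\<Sum>j\<in>UNIV. (\<zeta>2 j / S2) *\<^sub>R force U j x)))"
    show "is_cond_exp_given (gibbs \<beta> U) (cg_map \<zeta>1 \<zeta>2) (\<lambda>x. ((\<Sum>j\<in>UNIV. (\<zeta>1 j / S1) *\<^sub>R force U j x), (\<Sum>j\<in>UNIV. (\<zeta>2 j / S2) *\<^sub>R force U j x)))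
           (pmf_force \<beta> (partition_fn \<beta> U) mubar)"
    proof (rule G[OF _ _ _ _ i])
      show "(\<Sum>j\<in>UNIV. \<zeta>1 j * (\<zeta>1 j / S1)) = 1"
        using S1 by (simp add: sum_divide_distrib[symmetric] S1_def power2_eq_square)
      show "(\<Sum>j\<in>UNIV. \<zeta>2 j * (\<zeta>1 j / S1)) = 0"
        by (simp add: dis12 mult.assoc[symmetric])
      show "(\<Sum>j\<in>UNIV. \<zeta>1 j * (\<zeta>2 j / S2)) = 0"
      proof -
        have z: "\<zeta>1 j * (\<zeta>2 j / S2) = 0" for j using disjoint[rule_format, of j] by simp
        show ?thesis by (intro sum.neutral ballI z)
      qed
      show "(\<Sum>j\<in>UNIV. \<zeta>2 j * (\<zeta>2 j / S2)) = 1"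
        using S2 by (simp add: sum_divide_distrib[symmetric] S2_def power2_eq_square)
    qed
  qed
  define b1 where "b1 j = (if \<zeta>1 j \<noteq> 0 then 1 else 0 :: real)" for j
  define b2 where "b2 j = (if \<zeta>2 j \<noteq> 0 then 1 else 0 :: real)" for j
  have eqs: "(\<Sum>j\<in>{j. \<zeta> j \<noteq> 0}. force U j x) = (\<Sum>j\<in>UNIV. (if \<zeta> j \<noteq> 0 then 1 else 0 :: real) *\<^sub>R force U j x)"
    for \<zeta> :: "'n \<Rightarrow> real" and x
  proof -
    have "(\<Sum>j\<in>UNIV. (if \<zeta> j \<noteq> 0 then 1 else 0 :: real) *\<^sub>R force U j x) = (\<Sum>j\<in>UNIV. if j \<in> {j. \<zeta> j \<noteq> 0} then force U j x else 0)"
      by (rule sum.cong) auto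
    also have "\<dots> = (\<Sum>j\<in>UNIV \<inter> {j. \<zeta> j \<noteq> 0}. force U j x)"
      by (rule sum.inter_restrict[symmetric]) simp
    finally show ?thesis by simp
  qed
  have part2: "integrable (gibbs \<beta> U) (\<lambda>x. ((\<Sum>j\<in>UNIV. b1 j *\<^sub>R force U j x), (\<Sum>j\<in>UNIV. b2 j *\<^sub>R force U j x))) \<longrightarrow>
         is_cond_exp_given (gibbs \<beta> U) (cg_map \<zeta>1 \<zeta>2) (\<lambda>x. ((\<Sum>j\<in>UNIV. b1 j *\<^sub>R force U j x), (\<Sum>j\<in>UNIV. b2 j *\<^sub>R force U j x)))
           (pmf_force \<beta> (partition_fn \<beta> U) mubar)"
  proof
    assume i: "integrable (gibbs \<beta> U) (\<lambda>x. ((\<Sum>j\<in>UNIV. b1 j *\<^sub>R force U j x), (\<Sum>j\<in>UNIV. b2 j *\<^sub>R force U j x)))"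
    show "is_cond_exp_given (gibbs \<beta> U) (cg_map \<zeta>1 \<zeta>2) (\<lambda>x. ((\<Sum>j\<in>UNIV. b1 j *\<^sub>R force U j x), (\<Sum>j\<in>UNIV. b2 j *\<^sub>R force U j x)))
           (pmf_force \<beta> (partition_fn \<beta> U) mubar)"
    proof (rule G[OF _ _ _ _ i])
      have e: "\<zeta>1 j * b1 j = \<zeta>1 j" for j by (simp add: b1_def)
      show "(\<Sum>j\<in>UNIV. \<zeta>1 j * b1 j) = 1" by (simp only: e sum1)
      have z1: "\<zeta>2 j * b1 j = 0" for j using disjoint[rule_format, of j] by (auto simp: b1_def)
      show "(\<Sum>j\<in>UNIV. \<zeta>2 j * b1 j) = 0" by (intro sum.neutral ballI z1)
      have z2: "\<zeta>1 j * b2 j = 0" for j using disjoint[rule_format, of j] by (auto simp: b2_def)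
      show "(\<Sum>j\<in>UNIV. \<zeta>1 j * b2 j) = 0" by (intro sum.neutral ballI z2)
      have e2: "\<zeta>2 j * b2 j = \<zeta>2 j" for j by (simp add: b2_def)
      show "(\<Sum>j\<in>UNIV. \<zeta>2 j * b2 j) = 1" by (simp only: e2 sum2)
    qed
  qed
  show ?thesis
    using part1 part2 unfolding Let_def S1_def S2_def eqs b1_def b2_def by simp
qed

end
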